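(* Let $F:\mathbf{PolyEnd}\to\mathbf{PolyEnd}$, $\mathsf P\mapsto\overline{\mathsf P}$, be the free-monad monad. For every polynomial endofunctor $\mathsf P$, the functor $\mathbf{PolyEnd}/\mathsf P\to\mathbf{PolyEnd}/\overline{\mathsf P}$, $[\mathsf Q\to\mathsf P]\mapsto[\overline{\mathsf Q}\to\overline{\mathsf P}]$, has a left adjoint.
   Context: A polynomial endofunctor is a diagram of sets $P_0\xleftarrow{s}P_2\xrightarrow{p}P_1\xrightarrow{t}P_0$ with $p$ having finite fibres; a morphism is a triple of maps commuting with $s,p,t$ whose middle square is a pullback; these form $\mathbf{PolyEnd}$. A tree is a polynomial endofunctor with all sets finite, $t$ injective, $s$ injective with singleton complement (the root), and such that iterating $\sigma$ ($\sigma(\mathrm{root})=\mathrm{root}$, $\sigma(e)=t(p(e))$ for $e\in T_2$) brings every edge to the root. A $\mathsf P$-tree is a tree with a morphism to $\mathsf P$. The free monad on $\mathsf P$ is $\overline{\mathsf P}:\ P_0\leftarrow\mathrm{tr}'(\mathsf P)\to\mathrm{tr}(\mathsf P)\to P_0$, where $\mathrm{tr}(\mathsf P)$ is the set of isomorphism classes of $\mathsf P$-trees, $\mathrm{tr}'(\mathsf P)$ those with a marked leaf, the maps returning the decoration of the marked leaf, forgetting the mark, and returning the decoration of the root; for a morphism $\alpha:\mathsf Q\to\mathsf P$, $\overline\alpha$ composes decorations with $\alpha$. *)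

theory Defs
  imports Main
begin

section \<open>Polynomial endofunctors  P0 <-s- P2 -p-> P1 -t-> P0\<close>

record ('a, 'b, 'c) polyend =
  E0 :: "'a set"
  E1 :: "'b set"
  E2 :: "'c set"
  src :: "'c \<Rightarrow> 'a"
  prj :: "'c \<Rightarrow> 'b"
  tgt :: "'b \<Rightarrow> 'a"

definition fibre :: "('a, 'b, 'c) polyend \<Rightarrow> 'b \<Rightarrow> 'c set" where
  "fibre P b = {e \<in> E2 P. prj P e = b}"

definition polyend :: "('a, 'b, 'c) polyend \<Rightarrow> bool" where
  "polyend P \<longleftrightarrow>
     (\<forall>e\<in>E2 P. src P e \<in> E0 P) \<and> (\<forall>e\<in>E2 P. prj P e \<in> E1 P) \<and>
     (\<forall>b\<in>E1 P. tgt P b \<in> E0 P) \<and> (\<forall>b\<in>E1 P. finite (fibre P b))"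

text \<open>Morphisms: triples of maps commuting with s, p, t, middle square a pullback.\<close>

record ('a, 'b, 'c, 'd, 'e, 'f) pmor =
  m0 :: "'a \<Rightarrow> 'd"
  m1 :: "'b \<Rightarrow> 'e"
  m2 :: "'c \<Rightarrow> 'f"

definition is_mor ::
  "('a, 'b, 'c) polyend \<Rightarrow> ('d, 'e, 'f) polyend \<Rightarrow> ('a, 'b, 'c, 'd, 'e, 'f) pmor \<Rightarrow> bool" where
  "is_mor Q P f \<longleftrightarrow> polyend Q \<and> polyend P \<and>
     (\<forall>a\<in>E0 Q. m0 f a \<in> E0 P) \<and> (\<forall>b\<in>E1 Q. m1 f b \<in> E1 P) \<and> (\<forall>e\<in>E2 Q. m2 f e \<in> E2 P) \<and>
     (\<forall>e\<in>E2 Q. m0 f (src Q e) = src P (m2 f e)) \<and>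
     (\<forall>e\<in>E2 Q. m1 f (prj Q e) = prj P (m2 f e)) \<and>
     (\<forall>b\<in>E1 Q. m0 f (tgt Q b) = tgt P (m1 f b)) \<and>
     (\<forall>b\<in>E1 Q. bij_betw (m2 f) (fibre Q b) (fibre P (m1 f b)))"

definition pcomp ::
  "('d, 'e, 'f, 'g, 'h, 'i) pmor \<Rightarrow> ('a, 'b, 'c, 'd, 'e, 'f) pmor \<Rightarrow> ('a, 'b, 'c, 'g, 'h, 'i) pmor" where
  "pcomp g f = \<lparr>m0 = m0 g \<circ> m0 f, m1 = m1 g \<circ> m1 f, m2 = m2 g \<circ> m2 f\<rparr>"

definition pid :: "('a, 'b, 'c, 'a, 'b, 'c) pmor" where
  "pid = \<lparr>m0 = id, m1 = id, m2 = id\<rparr>"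

definition mor_eq ::
  "('a, 'b, 'c) polyend \<Rightarrow> ('a, 'b, 'c, 'd, 'e, 'f) pmor \<Rightarrow> ('a, 'b, 'c, 'd, 'e, 'f) pmor \<Rightarrow> bool" where
  "mor_eq Q f g \<longleftrightarrow> (\<forall>a\<in>E0 Q. m0 f a = m0 g a) \<and> (\<forall>b\<in>E1 Q. m1 f b = m1 g b) \<and>
                     (\<forall>e\<in>E2 Q. m2 f e = m2 g e)"

definition is_root :: "('a, 'b, 'c) polyend \<Rightarrow> 'a \<Rightarrow> bool" where
  "is_root T r \<longleftrightarrow> r \<in> E0 T \<and> r \<notin> src T ` E2 T"

definition root :: "('a, 'b, 'c) polyend \<Rightarrow> 'a" where
  "root T = (THE r. is_root T r)"

text \<open>sigma(root) = root, sigma(s e) = t(p e) for e in T2 (T2 identified with s(T2)).\<close>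
definition sigma :: "('a, 'b, 'c) polyend \<Rightarrow> 'a \<Rightarrow> 'a" where
  "sigma T x = (if \<exists>e\<in>E2 T. src T e = x
                then tgt T (prj T (THE e. e \<in> E2 T \<and> src T e = x)) else x)"

definition is_tree :: "('a, 'b, 'c) polyend \<Rightarrow> bool" where
  "is_tree T \<longleftrightarrow> polyend T \<and> finite (E0 T) \<and> finite (E1 T) \<and> finite (E2 T) \<and>
     inj_on (tgt T) (E1 T) \<and> inj_on (src T) (E2 T) \<and>
     (\<exists>r. E0 T - src T ` E2 T = {r}) \<and>
     (\<forall>x\<in>E0 T. \<exists>n. (sigma T ^^ n) x = root T)"

definition leaves :: "('a, 'b, 'c) polyend \<Rightarrow> 'a set" where
  "leaves T = E0 T - tgt T ` E1 T"

text \<open>P-trees.  Every finite tree is isomorphic to one whose carriers are sets of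
  natural numbers, so isomorphism classes are represented by such trees.\<close>

type_synonym ntree = "(nat, nat, nat) polyend"
type_synonym ('a, 'b, 'c) ptree = "ntree \<times> (nat, nat, nat, 'a, 'b, 'c) pmor"

definition ptrees :: "('a, 'b, 'c) polyend \<Rightarrow> ('a, 'b, 'c) ptree set" where
  "ptrees P = {(T, d). is_tree T \<and> is_mor T P d}"

definition ptree_iso_via ::
  "('a, 'b, 'c) ptree \<Rightarrow> ('a, 'b, 'c) ptree \<Rightarrow> (nat, nat, nat, nat, nat, nat) pmor \<Rightarrow> bool" where
  "ptree_iso_via x y f \<longleftrightarrow> (case (x, y) of ((T, d), (T', d')) \<Rightarrow>
      (\<exists>g. is_mor T T' f \<and> is_mor T' T g \<and> mor_eq T (pcomp g f) pid \<and> mor_eq T' (pcomp f g) pid \<and>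
           mor_eq T (pcomp d' f) d))"

definition ptree_iso :: "('a, 'b, 'c) ptree \<Rightarrow> ('a, 'b, 'c) ptree \<Rightarrow> bool" where
  "ptree_iso x y \<longleftrightarrow> (\<exists>f. ptree_iso_via x y f)"

definition mptree_iso :: "('a, 'b, 'c) ptree \<times> nat \<Rightarrow> ('a, 'b, 'c) ptree \<times> nat \<Rightarrow> bool" where
  "mptree_iso x y \<longleftrightarrow> (\<exists>f. ptree_iso_via (fst x) (fst y) f \<and> m0 f (snd x) = snd y)"

definition mptrees :: "('a, 'b, 'c) polyend \<Rightarrow> (('a, 'b, 'c) ptree \<times> nat) set" where
  "mptrees P = {(x, l). x \<in> ptrees P \<and> l \<in> leaves (fst x)}"

definition pclass :: "('a, 'b, 'c) polyend \<Rightarrow> ('a, 'b, 'c) ptree \<Rightarrow> ('a, 'b, 'c) ptree set" where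
  "pclass P x = {y \<in> ptrees P. ptree_iso x y}"

definition mclass :: "('a, 'b, 'c) polyend \<Rightarrow> ('a, 'b, 'c) ptree \<times> nat \<Rightarrow> (('a, 'b, 'c) ptree \<times> nat) set" where
  "mclass P x = {y \<in> mptrees P. mptree_iso x y}"

definition tr :: "('a, 'b, 'c) polyend \<Rightarrow> ('a, 'b, 'c) ptree set set" where
  "tr P = pclass P ` ptrees P"

definition trm :: "('a, 'b, 'c) polyend \<Rightarrow> (('a, 'b, 'c) ptree \<times> nat) set set" where
  "trm P = mclass P ` mptrees P"

definition free_monad ::
  "('a, 'b, 'c) polyend \<Rightarrow> ('a, ('a, 'b, 'c) ptree set, (('a, 'b, 'c) ptree \<times> nat) set) polyend" where
  "free_monad P =
     \<lparr>E0 = E0 P, E1 = tr P, E2 = trm P,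
      src = (\<lambda>c. let ((T, d), l) = (SOME r. r \<in> c) in m0 d l),
      prj = (\<lambda>c. pclass P (fst (SOME r. r \<in> c))),
      tgt = (\<lambda>c. let (T, d) = (SOME r. r \<in> c) in m0 d (root T))\<rparr>"

definition free_mor ::
  "('d, 'e, 'f) polyend \<Rightarrow> ('a, 'b, 'c, 'd, 'e, 'f) pmor \<Rightarrow>
   ('a, ('a, 'b, 'c) ptree set, (('a, 'b, 'c) ptree \<times> nat) set,
    'd, ('d, 'e, 'f) ptree set, (('d, 'e, 'f) ptree \<times> nat) set) pmor" where
  "free_mor P \<alpha> =
     \<lparr>m0 = m0 \<alpha>,
      m1 = (\<lambda>c. let (T, d) = (SOME r. r \<in> c) in pclass P (T, pcomp \<alpha> d)),
      m2 = (\<lambda>c. let ((T, d), l) = (SOME r. r \<in> c) in mclass P ((T, pcomp \<alpha> d), l))\<rparr>"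

text \<open>Given an object (X, phi : X -> free_monad P) of PolyEnd/free_monad P, a candidate
  (L, lam : L -> P) with eta : (X, phi) -> (free_monad L, free_mor P lam), and a test object
  (Q, kappa : Q -> P) with h : (X, phi) -> (free_monad Q, free_mor P kappa): h factors uniquely
  as free_mor Q g o eta for a morphism g : (L, lam) -> (Q, kappa) of PolyEnd/P.\<close>
definition factors_uniquely where
  "factors_uniquely P X \<phi> L lam \<eta> Q \<kappa> h \<longleftrightarrow>
     (is_mor Q P \<kappa> \<and> is_mor X (free_monad Q) h \<and> mor_eq X (pcomp (free_mor P \<kappa>) h) \<phi> \<longrightarrow>
      (\<exists>g. is_mor L Q g \<and> mor_eq L (pcomp \<kappa> g) lam \<and> mor_eq X (pcomp (free_mor Q g) \<eta>) h \<and>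
           (\<forall>g'. is_mor L Q g' \<and> mor_eq L (pcomp \<kappa> g') lam \<and> mor_eq X (pcomp (free_mor Q g') \<eta>) h
                 \<longrightarrow> mor_eq L g' g)))"

definition arrow_ok where
  "arrow_ok P X \<phi> L lam \<eta> \<longleftrightarrow>
     is_mor L P lam \<and> is_mor X (free_monad L) \<eta> \<and> mor_eq X (pcomp (free_mor P lam) \<eta>) \<phi>"

end

theory Submission
  imports Defs
begin


lemma pcomp_simps[simp]:
  "m0 (pcomp g f) = m0 g \<circ> m0 f" "m1 (pcomp g f) = m1 g \<circ> m1 f" "m2 (pcomp g f) = m2 g \<circ> m2 f"
  by (simp_all add: pcomp_def)

lemma pid_simps[simp]: "m0 pid = id" "m1 pid = id" "m2 pid = id"
  by (simp_all add: pid_def)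

lemma is_morD:
  assumes "is_mor Q P f"
  shows "polyend Q" "polyend P"
    "\<And>a. a \<in> E0 Q \<Longrightarrow> m0 f a \<in> E0 P"
    "\<And>b. b \<in> E1 Q \<Longrightarrow> m1 f b \<in> E1 P"
    "\<And>e. e \<in> E2 Q \<Longrightarrow> m2 f e \<in> E2 P"
    "\<And>e. e \<in> E2 Q \<Longrightarrow> m0 f (src Q e) = src P (m2 f e)"
    "\<And>e. e \<in> E2 Q \<Longrightarrow> m1 f (prj Q e) = prj P (m2 f e)"
    "\<And>b. b \<in> E1 Q \<Longrightarrow> m0 f (tgt Q b) = tgt P (m1 f b)"
    "\<And>b. b \<in> E1 Q \<Longrightarrow> bij_betw (m2 f) (fibre Q b) (fibre P (m1 f b))"
  using assms unfolding is_mor_def by auto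

lemma polyendD:
  assumes "polyend P"
  shows "\<And>e. e \<in> E2 P \<Longrightarrow> src P e \<in> E0 P" "\<And>e. e \<in> E2 P \<Longrightarrow> prj P e \<in> E1 P"
    "\<And>b. b \<in> E1 P \<Longrightarrow> tgt P b \<in> E0 P" "\<And>b. b \<in> E1 P \<Longrightarrow> finite (fibre P b)"
  using assms unfolding polyend_def by auto

lemma fibre_iff: "e \<in> fibre P b \<longleftrightarrow> e \<in> E2 P \<and> prj P e = b"
  by (simp add: fibre_def)

lemma mor_comp:
  assumes f: "is_mor A B f" and g: "is_mor B C g"
  shows "is_mor A C (pcomp g f)"
proof -
  have "bij_betw (m2 g \<circ> m2 f) (fibre A b) (fibre C (m1 g (m1 f b)))" if "b \<in> E1 A" for b
    using bij_betw_trans is_morD(9)[OF f that] is_morD(9)[OF g is_morD(4)[OF f that]] by blast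
  then show ?thesis using is_morD[OF f] is_morD[OF g] unfolding is_mor_def by auto
qed

lemma mor_cong:
  assumes f: "is_mor Q P f" and eq: "mor_eq Q f f'"
  shows "is_mor Q P f'"
proof -
  have "bij_betw (m2 f') (fibre Q b) (fibre P (m1 f' b))" if "b \<in> E1 Q" for b
  proof -
    have "bij_betw (m2 f) (fibre Q b) (fibre P (m1 f' b))"
      using is_morD(9)[OF f that] eq that unfolding mor_eq_def by auto
    then show ?thesis
      by (rule bij_betw_cong[THEN iffD1, rotated]) (use eq in \<open>auto simp: mor_eq_def fibre_def\<close>)
  qed
  moreover note Q = polyendD[OF is_morD(1)[OF f]]
  ultimately show ?thesis using is_morD[OF f] eq unfolding is_mor_def mor_eq_def
    by (intro conjI ballI; metis)
qed

lemma mor_id: "polyend Q \<Longrightarrow> is_mor Q Q pid"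
  unfolding is_mor_def by (auto simp: polyend_def)

lemma mor_eq_sym: "mor_eq Q f g \<Longrightarrow> mor_eq Q g f" by (auto simp: mor_eq_def)
lemma mor_eq_trans: "mor_eq Q f g \<Longrightarrow> mor_eq Q g h \<Longrightarrow> mor_eq Q f h" by (auto simp: mor_eq_def)
lemma mor_eq_refl: "mor_eq Q f f" by (auto simp: mor_eq_def)

lemma mor_eq_comp_right:
  assumes "is_mor A B f" "mor_eq B g g'" shows "mor_eq A (pcomp g f) (pcomp g' f)"
  using is_morD(3,4,5)[OF assms(1)] assms(2) unfolding mor_eq_def by simp

lemma mor_eq_comp_left:
  "mor_eq A f f' \<Longrightarrow> mor_eq A (pcomp g f) (pcomp g f')"
  unfolding mor_eq_def by simp

lemma mor_eq_assoc: "mor_eq A (pcomp h (pcomp g f)) (pcomp (pcomp h g) f)"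
  unfolding mor_eq_def by simp

definition iso_via where
  "iso_via T T' f \<longleftrightarrow> (\<exists>g. is_mor T T' f \<and> is_mor T' T g \<and> mor_eq T (pcomp g f) pid \<and> mor_eq T' (pcomp f g) pid)"

lemma ptree_iso_via_iff:
  "ptree_iso_via (T, d) (T', d') f \<longleftrightarrow> iso_via T T' f \<and> mor_eq T (pcomp d' f) d"
  unfolding ptree_iso_via_def iso_via_def by auto

lemma iso_refl: "polyend T \<Longrightarrow> iso_via T T pid"
  unfolding iso_via_def by (rule exI[of _ pid]) (auto simp: mor_eq_def mor_id)

lemma iso_viaD:
  assumes "iso_via T T' f"
  obtains g where "is_mor T T' f" "is_mor T' T g" "iso_via T' T g"
    "\<And>a. a \<in> E0 T \<Longrightarrow> m0 g (m0 f a) = a" "\<And>a. a \<in> E1 T \<Longrightarrow> m1 g (m1 f a) = a"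
    "\<And>a. a \<in> E2 T \<Longrightarrow> m2 g (m2 f a) = a"
    "\<And>a. a \<in> E0 T' \<Longrightarrow> m0 f (m0 g a) = a" "\<And>a. a \<in> E1 T' \<Longrightarrow> m1 f (m1 g a) = a"
    "\<And>a. a \<in> E2 T' \<Longrightarrow> m2 f (m2 g a) = a"
proof -
  from assms obtain g where g: "is_mor T T' f" "is_mor T' T g" "mor_eq T (pcomp g f) pid" "mor_eq T' (pcomp f g) pid"
    unfolding iso_via_def by blast
  have "iso_via T' T g" unfolding iso_via_def using g by blast
  then show ?thesis using that[of g] g unfolding mor_eq_def by simp
qed

lemma iso_trans:
  assumes "iso_via T T' f" "iso_via T' T'' f'"
  shows "iso_via T T'' (pcomp f' f)"
proof -
  obtain g where g: "is_mor T T' f" "is_mor T' T g" "iso_via T' T g"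
    "\<And>a. a \<in> E0 T \<Longrightarrow> m0 g (m0 f a) = a" "\<And>a. a \<in> E1 T \<Longrightarrow> m1 g (m1 f a) = a"
    "\<And>a. a \<in> E2 T \<Longrightarrow> m2 g (m2 f a) = a"
    "\<And>a. a \<in> E0 T' \<Longrightarrow> m0 f (m0 g a) = a" "\<And>a. a \<in> E1 T' \<Longrightarrow> m1 f (m1 g a) = a"
    "\<And>a. a \<in> E2 T' \<Longrightarrow> m2 f (m2 g a) = a"
    by (rule iso_viaD[OF assms(1)]) blast
  obtain g' where g': "is_mor T' T'' f'" "is_mor T'' T' g'" "iso_via T'' T' g'"
    "\<And>a. a \<in> E0 T' \<Longrightarrow> m0 g' (m0 f' a) = a" "\<And>a. a \<in> E1 T' \<Longrightarrow> m1 g' (m1 f' a) = a"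
    "\<And>a. a \<in> E2 T' \<Longrightarrow> m2 g' (m2 f' a) = a"
    "\<And>a. a \<in> E0 T'' \<Longrightarrow> m0 f' (m0 g' a) = a" "\<And>a. a \<in> E1 T'' \<Longrightarrow> m1 f' (m1 g' a) = a"
    "\<And>a. a \<in> E2 T'' \<Longrightarrow> m2 f' (m2 g' a) = a"
    by (rule iso_viaD[OF assms(2)]) blast
  have e1: "mor_eq T (pcomp (pcomp g g') (pcomp f' f)) pid"
    unfolding mor_eq_def using g(4,5,6) g'(4,5,6) is_morD(3,4,5)[OF g(1)] by simp
  have e2: "mor_eq T'' (pcomp (pcomp f' f) (pcomp g g')) pid"
    unfolding mor_eq_def using g(7,8,9) g'(7,8,9) is_morD(3,4,5)[OF g'(2)] by simp
  show ?thesis unfolding iso_via_def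
    using mor_comp[OF g(1) g'(1)] mor_comp[OF g'(2) g(2)] e1 e2 by blast
qed


lemma ptree_iso_via_sym:
  assumes "ptree_iso_via x y f"
  obtains g where "ptree_iso_via y x g"
    "\<And>a. a \<in> E0 (fst x) \<Longrightarrow> m0 g (m0 f a) = a" "\<And>a. a \<in> E0 (fst y) \<Longrightarrow> m0 f (m0 g a) = a"
proof -
  obtain T d T' d' where xy: "x = (T, d)" "y = (T', d')" by (cases x, cases y) auto
  from assms have i: "iso_via T T' f" and e: "mor_eq T (pcomp d' f) d" by (auto simp: xy ptree_iso_via_iff)
  obtain g where g: "is_mor T T' f" "is_mor T' T g" "iso_via T' T g"
    "\<And>a. a \<in> E0 T \<Longrightarrow> m0 g (m0 f a) = a" "\<And>a. a \<in> E1 T \<Longrightarrow> m1 g (m1 f a) = a"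
    "\<And>a. a \<in> E2 T \<Longrightarrow> m2 g (m2 f a) = a"
    "\<And>a. a \<in> E0 T' \<Longrightarrow> m0 f (m0 g a) = a" "\<And>a. a \<in> E1 T' \<Longrightarrow> m1 f (m1 g a) = a"
    "\<And>a. a \<in> E2 T' \<Longrightarrow> m2 f (m2 g a) = a"
    by (rule iso_viaD[OF i]) blast
  have aux: "\<forall>y\<in>B. G (k y) = F y" if "\<forall>x\<in>A. F (h x) = G x" "\<forall>y\<in>B. h (k y) = y" "\<forall>y\<in>B. k y \<in> A"
    for A B F G h k using that by metis
  have "\<forall>y\<in>E0 T'. m0 d (m0 g y) = m0 d' y"
    by (rule aux[of "E0 T"]) (use e g(7) is_morD(3)[OF g(2)] in \<open>auto simp: mor_eq_def\<close>)
  moreover have "\<forall>y\<in>E1 T'. m1 d (m1 g y) = m1 d' y"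
    by (rule aux[of "E1 T"]) (use e g(8) is_morD(4)[OF g(2)] in \<open>auto simp: mor_eq_def\<close>)
  moreover have "\<forall>y\<in>E2 T'. m2 d (m2 g y) = m2 d' y"
    by (rule aux[of "E2 T"]) (use e g(9) is_morD(5)[OF g(2)] in \<open>auto simp: mor_eq_def\<close>)
  ultimately have "mor_eq T' (pcomp d g) d'" unfolding mor_eq_def by simp
  then show ?thesis using that[of g] g by (auto simp: xy ptree_iso_via_iff)
qed

lemma ptree_iso_via_trans:
  assumes "ptree_iso_via x y f" "ptree_iso_via y z f'"
  shows "ptree_iso_via x z (pcomp f' f)"
proof -
  obtain T d T' d' T'' d'' where xy: "x = (T, d)" "y = (T', d')" "z = (T'', d'')" by (cases x, cases y, cases z) auto
  from assms have i: "iso_via T T' f" "iso_via T' T'' f'" and e: "mor_eq T (pcomp d' f) d" "mor_eq T' (pcomp d'' f') d'"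
    by (auto simp: xy ptree_iso_via_iff)
  have m: "is_mor T T' f" using i unfolding iso_via_def by auto
  have "mor_eq T (pcomp d'' (pcomp f' f)) d"
    using e is_morD(3,4,5)[OF m] unfolding mor_eq_def by auto
  then show ?thesis using iso_trans[OF i] by (auto simp: xy ptree_iso_via_iff)
qed

lemma ptree_iso_sym: "ptree_iso x y \<Longrightarrow> ptree_iso y x"
proof -
  assume "ptree_iso x y"
  then obtain f where "ptree_iso_via x y f" unfolding ptree_iso_def by blast
  then obtain g where "ptree_iso_via y x g" by (rule ptree_iso_via_sym)
  then show ?thesis unfolding ptree_iso_def by blast
qed

lemma ptree_iso_trans: "ptree_iso x y \<Longrightarrow> ptree_iso y z \<Longrightarrow> ptree_iso x z"
  unfolding ptree_iso_def using ptree_iso_via_trans by blast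

lemma ptree_iso_via_refl: "x \<in> ptrees P \<Longrightarrow> ptree_iso_via x x pid"
  unfolding ptrees_def
  by (cases x) (auto simp: ptree_iso_via_iff mor_eq_def is_tree_def intro!: iso_refl)

lemma ptree_iso_refl: "x \<in> ptrees P \<Longrightarrow> ptree_iso x x"
  unfolding ptree_iso_def using ptree_iso_via_refl by blast

lemma mptree_iso_refl: "fst x \<in> ptrees P \<Longrightarrow> mptree_iso x x"
  unfolding mptree_iso_def using ptree_iso_via_refl by fastforce

lemma mptree_iso_sym: "mptree_iso x y \<Longrightarrow> snd x \<in> E0 (fst (fst x)) \<Longrightarrow> mptree_iso y x"
proof -
  assume "mptree_iso x y" and l: "snd x \<in> E0 (fst (fst x))"
  then obtain f where f: "ptree_iso_via (fst x) (fst y) f" "m0 f (snd x) = snd y" unfolding mptree_iso_def by blast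
  obtain g where "ptree_iso_via (fst y) (fst x) g" "\<And>a. a \<in> E0 (fst (fst x)) \<Longrightarrow> m0 g (m0 f a) = a"
    by (rule ptree_iso_via_sym[OF f(1)]) blast
  moreover have "m0 g (snd y) = snd x" using calculation(2)[OF l] f(2) by simp
  ultimately show ?thesis unfolding mptree_iso_def by blast
qed

lemma mptree_iso_trans: "mptree_iso x y \<Longrightarrow> mptree_iso y z \<Longrightarrow> mptree_iso x z"
proof -
  assume "mptree_iso x y" "mptree_iso y z"
  then obtain f f' where "ptree_iso_via (fst x) (fst y) f" "m0 f (snd x) = snd y"
    "ptree_iso_via (fst y) (fst z) f'" "m0 f' (snd y) = snd z" unfolding mptree_iso_def by blast
  then have "ptree_iso_via (fst x) (fst z) (pcomp f' f) \<and> m0 (pcomp f' f) (snd x) = snd z"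
    using ptree_iso_via_trans[of "fst x" "fst y" f "fst z" f'] by simp
  then show ?thesis unfolding mptree_iso_def by blast
qed


lemma tree_root_eq:
  assumes "is_tree T" shows "E0 T - src T ` E2 T = {root T}"
proof -
  obtain r where r: "E0 T - src T ` E2 T = {r}" using assms unfolding is_tree_def by blast
  have "root T = r" unfolding root_def
    by (rule the_equality) (use r in \<open>auto simp: is_root_def\<close>)
  then show ?thesis using r by simp
qed

lemma tree_root: "is_tree T \<Longrightarrow> root T \<in> E0 T" "is_tree T \<Longrightarrow> root T \<notin> src T ` E2 T"
  using tree_root_eq by blast+

lemma tree_nonroot: "is_tree T \<Longrightarrow> x \<in> E0 T \<Longrightarrow> x \<noteq> root T \<Longrightarrow> \<exists>e\<in>E2 T. src T e = x"
  using tree_root_eq by blast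

lemma tree_polyend: "is_tree T \<Longrightarrow> polyend T" by (simp add: is_tree_def)

lemma sigma_src:
  assumes "is_tree T" "e \<in> E2 T" shows "sigma T (src T e) = tgt T (prj T e)"
proof -
  have inj: "inj_on (src T) (E2 T)" using assms by (simp add: is_tree_def)
  have "(THE e'. e' \<in> E2 T \<and> src T e' = src T e) = e"
    by (rule the_equality) (use assms inj in \<open>auto dest: inj_onD\<close>)
  then show ?thesis using assms unfolding sigma_def by auto
qed

lemma tree_reach: "is_tree T \<Longrightarrow> x \<in> E0 T \<Longrightarrow> \<exists>n. (sigma T ^^ n) x = root T"
  by (simp add: is_tree_def)

lemma iso_root:
  assumes T: "is_tree T" and T': "is_tree T'" and i: "iso_via T T' f"
  shows "m0 f (root T) = root T'"
proof (rule ccontr)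
  assume ne: "m0 f (root T) \<noteq> root T'"
  obtain g where g: "is_mor T T' f" "is_mor T' T g" "iso_via T' T g"
    "\<And>a. a \<in> E0 T \<Longrightarrow> m0 g (m0 f a) = a" "\<And>a. a \<in> E1 T \<Longrightarrow> m1 g (m1 f a) = a"
    "\<And>a. a \<in> E2 T \<Longrightarrow> m2 g (m2 f a) = a"
    "\<And>a. a \<in> E0 T' \<Longrightarrow> m0 f (m0 g a) = a" "\<And>a. a \<in> E1 T' \<Longrightarrow> m1 f (m1 g a) = a"
    "\<And>a. a \<in> E2 T' \<Longrightarrow> m2 f (m2 g a) = a"
    by (rule iso_viaD[OF i]) blast
  have r: "m0 f (root T) \<in> E0 T'" using is_morD(3)[OF g(1)] tree_root[OF T] by blast
  obtain e where e: "e \<in> E2 T'" "src T' e = m0 f (root T)" using tree_nonroot[OF T' r ne] by blast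
  have "src T (m2 g e) = m0 g (src T' e)" using is_morD(6)[OF g(2) e(1)] by simp
  also have "\<dots> = root T" using e(2) g(4) tree_root[OF T] by simp
  finally show False using tree_root(2)[OF T] is_morD(5)[OF g(2) e(1)] by (metis image_eqI)
qed

lemma iso_leaf:
  assumes i: "iso_via T T' f" and l: "l \<in> leaves T"
  shows "m0 f l \<in> leaves T'"
proof -
  obtain g where g: "is_mor T T' f" "is_mor T' T g" "iso_via T' T g"
    "\<And>a. a \<in> E0 T \<Longrightarrow> m0 g (m0 f a) = a" "\<And>a. a \<in> E1 T \<Longrightarrow> m1 g (m1 f a) = a"
    "\<And>a. a \<in> E2 T \<Longrightarrow> m2 g (m2 f a) = a"
    "\<And>a. a \<in> E0 T' \<Longrightarrow> m0 f (m0 g a) = a" "\<And>a. a \<in> E1 T' \<Longrightarrow> m1 f (m1 g a) = a"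
    "\<And>a. a \<in> E2 T' \<Longrightarrow> m2 f (m2 g a) = a"
    by (rule iso_viaD[OF i]) blast
  have l0: "l \<in> E0 T" "l \<notin> tgt T ` E1 T" using l by (auto simp: leaves_def)
  have "m0 f l \<notin> tgt T' ` E1 T'"
  proof
    assume "m0 f l \<in> tgt T' ` E1 T'"
    then obtain b where b: "b \<in> E1 T'" "tgt T' b = m0 f l" by auto
    have "tgt T (m1 g b) = m0 g (tgt T' b)" using is_morD(8)[OF g(2) b(1)] by simp
    also have "\<dots> = l" using b(2) g(4) l0 by simp
    finally show False using l0(2) is_morD(4)[OF g(2) b(1)] by blast
  qed
  then show ?thesis using is_morD(3)[OF g(1) l0(1)] by (simp add: leaves_def)
qed

lemma rigid:
  assumes T: "is_tree T" and T': "is_tree T'" and d': "is_mor T' P d'"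
    and f1: "is_mor T T' f1" and f2: "is_mor T T' f2"
    and r: "m0 f1 (root T) = m0 f2 (root T)"
    and dd: "\<And>e. e \<in> E2 T \<Longrightarrow> m2 d' (m2 f1 e) = m2 d' (m2 f2 e)"
  shows "mor_eq T f1 f2"
proof -
  have injt: "inj_on (tgt T') (E1 T')" and injs: "inj_on (src T') (E2 T')" using T' by (auto simp: is_tree_def)
  note pT = polyendD[OF tree_polyend[OF T]]
  have node: "m1 f1 b = m1 f2 b" if b: "b \<in> E1 T" "m0 f1 (tgt T b) = m0 f2 (tgt T b)" for b
  proof -
    have "tgt T' (m1 f1 b) = tgt T' (m1 f2 b)" using b is_morD(8)[OF f1 b(1)] is_morD(8)[OF f2 b(1)] by simp
    then show ?thesis using injt is_morD(4)[OF f1 b(1)] is_morD(4)[OF f2 b(1)] by (auto dest: inj_onD)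
  qed
  have E0: "\<forall>x\<in>E0 T. (sigma T ^^ n) x = root T \<longrightarrow> m0 f1 x = m0 f2 x" for n
  proof (induction n)
    case 0 then show ?case using r by simp
  next
    case (Suc n)
    show ?case
    proof (intro ballI impI)
      fix x assume x: "x \<in> E0 T" "(sigma T ^^ Suc n) x = root T"
      show "m0 f1 x = m0 f2 x"
      proof (cases "x = root T")
        case True then show ?thesis using r by simp
      next
        case False
        then obtain e where e: "e \<in> E2 T" "src T e = x" using tree_nonroot[OF T x(1)] by blast
        have "(sigma T ^^ n) (sigma T x) = root T"
          using x(2) by (simp only: funpow_Suc_right o_apply)
        then have "(sigma T ^^ n) (tgt T (prj T e)) = root T"
          using sigma_src[OF T e(1)] e(2) by simp
        moreover have tpe: "tgt T (prj T e) \<in> E0 T" using pT e by blast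
        ultimately have "m0 f1 (tgt T (prj T e)) = m0 f2 (tgt T (prj T e))" using Suc.IH by blast
        then have b: "m1 f1 (prj T e) = m1 f2 (prj T e)" using node pT(2)[OF e(1)] by blast
        have fib: "m2 f1 e \<in> fibre T' (m1 f1 (prj T e))" "m2 f2 e \<in> fibre T' (m1 f1 (prj T e))"
          using is_morD(5,7)[OF f1 e(1)] is_morD(5,7)[OF f2 e(1)] b by (auto simp: fibre_def)
        have "inj_on (m2 d') (fibre T' (m1 f1 (prj T e)))"
          using is_morD(9)[OF d' is_morD(4)[OF f1 pT(2)[OF e(1)]]] by (simp add: bij_betw_def)
        then have "m2 f1 e = m2 f2 e" using fib dd[OF e(1)] by (auto dest: inj_onD)
        then show ?thesis using is_morD(6)[OF f1 e(1)] is_morD(6)[OF f2 e(1)] e(2) by simp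
      qed
    qed
  qed
  have e0: "\<And>x. x \<in> E0 T \<Longrightarrow> m0 f1 x = m0 f2 x" using E0 tree_reach[OF T] by blast
  have e1: "\<And>b. b \<in> E1 T \<Longrightarrow> m1 f1 b = m1 f2 b" using node e0 pT(3) by blast
  have e2: "\<And>e. e \<in> E2 T \<Longrightarrow> m2 f1 e = m2 f2 e"
  proof -
    fix e assume e: "e \<in> E2 T"
    have "src T' (m2 f1 e) = src T' (m2 f2 e)"
      using is_morD(6)[OF f1 e] is_morD(6)[OF f2 e] e0 pT(1)[OF e] by metis
    then show "m2 f1 e = m2 f2 e" using injs is_morD(5)[OF f1 e] is_morD(5)[OF f2 e] by (auto dest: inj_onD)
  qed
  show ?thesis unfolding mor_eq_def using e0 e1 e2 by blast
qed


lemma fm_simps: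
  "E0 (free_monad P) = E0 P" "E1 (free_monad P) = tr P" "E2 (free_monad P) = trm P"
  "src (free_monad P) c = m0 (snd (fst (SOME r. r \<in> c))) (snd (SOME r. r \<in> c))"
  "prj (free_monad P) c = pclass P (fst (SOME r. r \<in> c))"
  "tgt (free_monad P) c' = m0 (snd (SOME r. r \<in> c')) (root (fst (SOME r. r \<in> c')))"
  by (simp_all add: free_monad_def Let_def split_beta)

lemma fmor_simps:
  "m0 (free_mor P \<alpha>) = m0 \<alpha>"
  "m1 (free_mor P \<alpha>) c' = pclass P (fst (SOME r. r \<in> c'), pcomp \<alpha> (snd (SOME r. r \<in> c')))"
  "m2 (free_mor P \<alpha>) c = mclass P ((fst (fst (SOME r. r \<in> c)), pcomp \<alpha> (snd (fst (SOME r. r \<in> c)))), snd (SOME r. r \<in> c))"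
  by (simp_all add: free_mor_def Let_def split_beta)

lemma pclass_mem: "r \<in> ptrees P \<Longrightarrow> r \<in> pclass P r"
  unfolding pclass_def using ptree_iso_refl by blast

lemma pclass_iff: "y \<in> pclass P r \<longleftrightarrow> y \<in> ptrees P \<and> ptree_iso r y"
  unfolding pclass_def by blast

lemma pclass_eq_iff:
  assumes "r \<in> ptrees P" "r' \<in> ptrees P"
  shows "pclass P r = pclass P r' \<longleftrightarrow> ptree_iso r r'"
proof
  assume "pclass P r = pclass P r'"
  then have "r' \<in> pclass P r" using pclass_mem[OF assms(2)] by simp
  then show "ptree_iso r r'" by (simp add: pclass_iff)
next
  assume "ptree_iso r r'"
  then show "pclass P r = pclass P r'" unfolding pclass_def
    using ptree_iso_sym ptree_iso_trans by blast
qed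

lemma pclass_some:
  assumes "r \<in> ptrees P"
  shows "(SOME y. y \<in> pclass P r) \<in> ptrees P" "ptree_iso r (SOME y. y \<in> pclass P r)"
proof -
  have "(SOME y. y \<in> pclass P r) \<in> pclass P r" using pclass_mem[OF assms] by (rule someI)
  then show "(SOME y. y \<in> pclass P r) \<in> ptrees P" "ptree_iso r (SOME y. y \<in> pclass P r)"
    by (auto simp: pclass_iff)
qed

lemma mptrees_iff: "x \<in> mptrees P \<longleftrightarrow> fst x \<in> ptrees P \<and> snd x \<in> leaves (fst (fst x))"
  unfolding mptrees_def by auto

lemma leaves_sub: "l \<in> leaves T \<Longrightarrow> l \<in> E0 T" by (simp add: leaves_def)

lemma mclass_mem: "r \<in> mptrees P \<Longrightarrow> r \<in> mclass P r"
  unfolding mclass_def using mptree_iso_refl mptrees_iff by blast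

lemma mclass_iff: "y \<in> mclass P r \<longleftrightarrow> y \<in> mptrees P \<and> mptree_iso r y"
  unfolding mclass_def by blast

lemma mclass_eq_iff:
  assumes "r \<in> mptrees P" "r' \<in> mptrees P"
  shows "mclass P r = mclass P r' \<longleftrightarrow> mptree_iso r r'"
proof
  assume "mclass P r = mclass P r'"
  then have "r' \<in> mclass P r" using mclass_mem[OF assms(2)] by simp
  then show "mptree_iso r r'" by (simp add: mclass_iff)
next
  assume a: "mptree_iso r r'"
  have "snd r \<in> E0 (fst (fst r))" using assms(1) by (auto simp: mptrees_iff leaves_def)
  then have s: "mptree_iso r' r" using mptree_iso_sym[OF a] by blast
  show "mclass P r = mclass P r'" unfolding mclass_def
    using mptree_iso_trans a s by blast
qed

lemma mclass_some:
  assumes "r \<in> mptrees P"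
  shows "(SOME y. y \<in> mclass P r) \<in> mptrees P" "mptree_iso r (SOME y. y \<in> mclass P r)"
proof -
  have "(SOME y. y \<in> mclass P r) \<in> mclass P r" using mclass_mem[OF assms] by (rule someI)
  then show "(SOME y. y \<in> mclass P r) \<in> mptrees P" "mptree_iso r (SOME y. y \<in> mclass P r)"
    by (auto simp: mclass_iff)
qed

lemma ptrees_iff: "(T, d) \<in> ptrees P \<longleftrightarrow> is_tree T \<and> is_mor T P d"
  by (simp add: ptrees_def)

lemma tgt_fm:
  assumes r: "r \<in> ptrees P"
  shows "tgt (free_monad P) (pclass P r) = m0 (snd r) (root (fst r))"
proof -
  obtain T d where rr: "r = (T, d)" by (cases r)
  obtain T' d' where ss: "(SOME y. y \<in> pclass P r) = (T', d')" by (cases "SOME y. y \<in> pclass P r")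
  have "ptree_iso (T, d) (T', d')" using pclass_some(2)[OF r] rr ss by simp
  then obtain f where f: "iso_via T T' f" "mor_eq T (pcomp d' f) d"
    unfolding ptree_iso_def by (auto simp: ptree_iso_via_iff)
  have t: "is_tree T" "is_tree T'" using r pclass_some(1)[OF r] rr ss by (auto simp: ptrees_iff)
  have "m0 f (root T) = root T'" by (rule iso_root[OF t f(1)])
  then have "m0 d' (root T') = m0 d (root T)" using f(2) tree_root(1)[OF t(1)] by (auto simp: mor_eq_def)
  then show ?thesis unfolding fm_simps ss by (simp add: rr)
qed

lemma prj_fm:
  assumes r: "r \<in> mptrees P"
  shows "prj (free_monad P) (mclass P r) = pclass P (fst r)"
proof -
  have "mptree_iso r (SOME y. y \<in> mclass P r)" by (rule mclass_some(2)[OF r])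
  then have "ptree_iso (fst r) (fst (SOME y. y \<in> mclass P r))" unfolding mptree_iso_def ptree_iso_def by blast
  moreover have "fst r \<in> ptrees P" "fst (SOME y. y \<in> mclass P r) \<in> ptrees P"
    using mclass_some(1)[OF r] r by (auto simp: mptrees_iff)
  ultimately have "pclass P (fst (SOME y. y \<in> mclass P r)) = pclass P (fst r)"
    using pclass_eq_iff by blast
  then show ?thesis unfolding fm_simps .
qed

lemma src_fm:
  assumes r: "r \<in> mptrees P"
  shows "src (free_monad P) (mclass P r) = m0 (snd (fst r)) (snd r)"
proof -
  obtain T d l where rr: "r = ((T, d), l)" by (metis prod.collapse)
  obtain T' d' l' where ss: "(SOME y. y \<in> mclass P r) = ((T', d'), l')" by (metis prod.collapse)
  have "mptree_iso ((T, d), l) ((T', d'), l')" using mclass_some(2)[OF r] rr ss by simp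
  then obtain f where f: "iso_via T T' f" "mor_eq T (pcomp d' f) d" "m0 f l = l'"
    unfolding mptree_iso_def by (auto simp: ptree_iso_via_iff)
  have "l \<in> E0 T" using r rr by (auto simp: mptrees_iff leaves_def)
  then have "m0 d' l' = m0 d l" using f(2,3) by (auto simp: mor_eq_def)
  then show ?thesis unfolding fm_simps ss by (simp add: rr)
qed

lemma mclass_leaf_inj:
  assumes r: "r \<in> ptrees P" and l: "l \<in> leaves (fst r)" "l' \<in> leaves (fst r)"
    and eq: "mclass P (r, l) = mclass P (r, l')"
  shows "l = l'"
proof -
  obtain T d where rr: "r = (T, d)" by (cases r)
  have m: "(r, l) \<in> mptrees P" "(r, l') \<in> mptrees P" using r l by (auto simp: mptrees_iff)
  have "mptree_iso (r, l) (r, l')" using eq mclass_eq_iff[OF m] by simp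
  then obtain f where f: "iso_via T T f" "mor_eq T (pcomp d f) d" "m0 f l = l'"
    unfolding mptree_iso_def by (auto simp: rr ptree_iso_via_iff)
  have t: "is_tree T" "is_mor T P d" using r rr by (auto simp: ptrees_iff)
  have fm: "is_mor T T f" using f(1) unfolding iso_via_def by blast
  have "mor_eq T f pid"
    by (rule rigid[OF t(1) t(1) t(2) fm mor_id[OF tree_polyend[OF t(1)]]])
       (use iso_root[OF t(1) t(1) f(1)] f(2) in \<open>auto simp: mor_eq_def\<close>)
  then show ?thesis using f(3) l rr by (auto simp: mor_eq_def leaves_def)
qed

lemma fibre_fm:
  assumes r: "r \<in> ptrees P"
  shows "fibre (free_monad P) (pclass P r) = (\<lambda>l. mclass P (r, l)) ` leaves (fst r)"
proof
  show "fibre (free_monad P) (pclass P r) \<subseteq> (\<lambda>l. mclass P (r, l)) ` leaves (fst r)"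
  proof
    fix m assume m: "m \<in> fibre (free_monad P) (pclass P r)"
    then obtain r' where r': "r' \<in> mptrees P" "m = mclass P r'"
      by (auto simp: fibre_def fm_simps trm_def)
    have "pclass P (fst r') = pclass P r" using m r' prj_fm[OF r'(1)] by (simp add: fibre_def)
    then have "ptree_iso (fst r') r" using pclass_eq_iff[of "fst r'" P r] r r'(1) by (simp add: mptrees_iff)
    then obtain f where f: "ptree_iso_via (fst r') r f" unfolding ptree_iso_def by blast
    obtain T d T' d' l' where rr: "r = (T, d)" "r' = ((T', d'), l')" by (metis prod.collapse)
    have if': "iso_via T' T f" using f rr by (simp add: ptree_iso_via_iff)
    have lf: "m0 f l' \<in> leaves T" using iso_leaf[OF if'] r' rr by (auto simp: mptrees_iff)
    have "mptree_iso r' (r, m0 f l')" using f rr unfolding mptree_iso_def by auto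
    moreover have m2: "(r, m0 f l') \<in> mptrees P" using r lf rr by (simp add: mptrees_iff)
    ultimately have "m = mclass P (r, m0 f l')"
      using mclass_eq_iff[OF r'(1) m2] r'(2) by simp
    then show "m \<in> (\<lambda>l. mclass P (r, l)) ` leaves (fst r)" using lf rr by auto
  qed
next
  show "(\<lambda>l. mclass P (r, l)) ` leaves (fst r) \<subseteq> fibre (free_monad P) (pclass P r)"
  proof
    fix m assume "m \<in> (\<lambda>l. mclass P (r, l)) ` leaves (fst r)"
    then obtain l where l: "l \<in> leaves (fst r)" "m = mclass P (r, l)" by blast
    have rl: "(r, l) \<in> mptrees P" using r l by (simp add: mptrees_iff)
    show "m \<in> fibre (free_monad P) (pclass P r)"
      using rl prj_fm[OF rl] l unfolding fibre_def fm_simps trm_def by auto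
  qed
qed

lemma polyend_fm:
  assumes "polyend P" shows "polyend (free_monad P)"
proof -
  have "src (free_monad P) m \<in> E0 P" if mm: "m \<in> trm P" for m
  proof -
    obtain r where r: "r \<in> mptrees P" "m = mclass P r" using mm unfolding trm_def by blast
    obtain T d l where rr: "r = ((T, d), l)" by (metis prod.collapse)
    have "is_mor T P d" "l \<in> E0 T" using r rr by (auto simp: mptrees_iff ptrees_iff leaves_def)
    then show ?thesis using src_fm[OF r(1)] r rr is_morD(3) by auto
  qed
  moreover have "prj (free_monad P) m \<in> tr P" if mm: "m \<in> trm P" for m
  proof -
    obtain r where r: "r \<in> mptrees P" "m = mclass P r" using mm unfolding trm_def by blast
    then have "fst r \<in> ptrees P" by (simp add: mptrees_iff)
    then show ?thesis using prj_fm[OF r(1)] r(2) unfolding tr_def by simp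
  qed
  moreover have "tgt (free_monad P) c \<in> E0 P" "finite (fibre (free_monad P) c)" if cc: "c \<in> tr P" for c
  proof -
    obtain r where r: "r \<in> ptrees P" "c = pclass P r" using cc unfolding tr_def by blast
    obtain T d where rr: "r = (T, d)" by (cases r)
    have t: "is_tree T" "is_mor T P d" using r rr by (auto simp: ptrees_iff)
    show "tgt (free_monad P) c \<in> E0 P" using tgt_fm[OF r(1)] r rr is_morD(3)[OF t(2)] tree_root[OF t(1)] by auto
    have "finite (leaves T)" using t(1) by (auto simp: is_tree_def leaves_def)
    then show "finite (fibre (free_monad P) c)" using fibre_fm[OF r(1)] r rr by auto
  qed
  ultimately show ?thesis unfolding polyend_def fm_simps by blast
qed

lemma push_ptrees:
  assumes a: "is_mor Q P \<alpha>" and r: "(T, d) \<in> ptrees Q" shows "(T, pcomp \<alpha> d) \<in> ptrees P"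
  using r mor_comp[OF _ a] by (auto simp: ptrees_iff)

lemma push_iso:
  assumes "ptree_iso_via (T, d) (T', d') f"
  shows "ptree_iso_via (T, pcomp \<alpha> d) (T', pcomp \<alpha> d') f"
proof -
  have "mor_eq T (pcomp d' f) d" using assms by (simp add: ptree_iso_via_iff)
  then have "mor_eq T (pcomp (pcomp \<alpha> d') f) (pcomp \<alpha> d)"
    unfolding mor_eq_def by simp
  then show ?thesis using assms by (simp add: ptree_iso_via_iff)
qed

lemma fmor1:
  assumes a: "is_mor Q P \<alpha>" and r: "r \<in> ptrees Q"
  shows "m1 (free_mor P \<alpha>) (pclass Q r) = pclass P (fst r, pcomp \<alpha> (snd r))"
proof -
  obtain T d where rr: "r = (T, d)" by (cases r)
  obtain T' d' where ss: "(SOME y. y \<in> pclass Q r) = (T', d')" by (cases "SOME y. y \<in> pclass Q r")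
  have "ptree_iso (T, d) (T', d')" using pclass_some(2)[OF r] rr ss by simp
  then have i: "ptree_iso (T, pcomp \<alpha> d) (T', pcomp \<alpha> d')" unfolding ptree_iso_def using push_iso by blast
  have "(T', d') \<in> ptrees Q" using pclass_some(1)[OF r] ss by simp
  then have "pclass P (T', pcomp \<alpha> d') = pclass P (T, pcomp \<alpha> d)"
    using pclass_eq_iff push_ptrees[OF a] r rr i ptree_iso_sym by metis
  then show ?thesis unfolding fmor_simps ss by (simp add: rr)
qed

lemma fmor2:
  assumes a: "is_mor Q P \<alpha>" and r: "r \<in> mptrees Q"
  shows "m2 (free_mor P \<alpha>) (mclass Q r) = mclass P ((fst (fst r), pcomp \<alpha> (snd (fst r))), snd r)"
proof -
  obtain T d l where rr: "r = ((T, d), l)" by (metis prod.collapse)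
  obtain T' d' l' where ss: "(SOME y. y \<in> mclass Q r) = ((T', d'), l')" by (metis prod.collapse)
  have "mptree_iso ((T, d), l) ((T', d'), l')" using mclass_some(2)[OF r] rr ss by simp
  then have i: "mptree_iso ((T, pcomp \<alpha> d), l) ((T', pcomp \<alpha> d'), l')" unfolding mptree_iso_def using push_iso by fastforce
  have m': "((T', d'), l') \<in> mptrees Q" using mclass_some(1)[OF r] ss by simp
  have m1: "((T', pcomp \<alpha> d'), l') \<in> mptrees P" "((T, pcomp \<alpha> d), l) \<in> mptrees P"
    using m' r rr push_ptrees[OF a] by (auto simp: mptrees_iff)
  have "mclass P ((T', pcomp \<alpha> d'), l') = mclass P ((T, pcomp \<alpha> d), l)"
    using mclass_eq_iff[OF m1(2) m1(1)] i by simp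
  then show ?thesis unfolding fmor_simps ss by (simp add: rr)
qed

lemma pclass_cong:
  assumes r: "(T, d) \<in> ptrees P" and e: "mor_eq T d d'"
  shows "(T, d') \<in> ptrees P" "pclass P (T, d') = pclass P (T, d)"
proof -
  show t: "(T, d') \<in> ptrees P" using r mor_cong e by (auto simp: ptrees_iff)
  have "ptree_iso_via (T, d) (T, d') pid"
    using iso_refl r e by (auto simp: ptree_iso_via_iff ptrees_iff is_tree_def mor_eq_def)
  then show "pclass P (T, d') = pclass P (T, d)" using pclass_eq_iff[OF r t] ptree_iso_def by blast
qed

lemma mclass_cong:
  assumes r: "((T, d), l) \<in> mptrees P" and e: "mor_eq T d d'"
  shows "((T, d'), l) \<in> mptrees P" "mclass P ((T, d'), l) = mclass P ((T, d), l)"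
proof -
  show t: "((T, d'), l) \<in> mptrees P" using r pclass_cong(1)[OF _ e] by (auto simp: mptrees_iff)
  have "ptree_iso_via (T, d) (T, d') pid"
    using iso_refl r e by (auto simp: ptree_iso_via_iff ptrees_iff is_tree_def mor_eq_def mptrees_iff)
  then have "mptree_iso ((T, d), l) ((T, d'), l)" unfolding mptree_iso_def by auto
  then show "mclass P ((T, d'), l) = mclass P ((T, d), l)" using mclass_eq_iff[OF r t] by simp
qed


type_synonym ('a, 'b, 'c, 'd, 'e, 'f) U = "('a + 'b + 'c + 'd + 'e + 'f + nat) list"

definition rawA :: "'x0 \<Rightarrow> ('x0, 'x1, 'x2, 'p0, 'p1, 'p2) U" where "rawA a = [Inl a]"
definition rawI :: "'x1 \<Rightarrow> nat \<Rightarrow> ('x0, 'x1, 'x2, 'p0, 'p1, 'p2) U" where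
  "rawI x n = [Inr (Inl x), Inr (Inr (Inr (Inr (Inr (Inr n)))))]"
definition wx :: "('x0, 'x1, 'x2, 'p0, 'p1, 'p2) U \<Rightarrow> 'x1" where
  "wx w = (case w ! 0 of Inr (Inl x) \<Rightarrow> x | _ \<Rightarrow> undefined)"
definition wn :: "('x0, 'x1, 'x2, 'p0, 'p1, 'p2) U \<Rightarrow> nat" where
  "wn w = (case w ! 1 of Inr (Inr (Inr (Inr (Inr (Inr n))))) \<Rightarrow> n | _ \<Rightarrow> undefined)"
definition val_of :: "('x0 \<Rightarrow> 'q0) \<Rightarrow> ('x1 \<Rightarrow> (nat, nat, nat, 'q0, 'q1, 'q2) pmor) \<Rightarrow> ('x0, 'x1, 'x2, 'p0, 'p1, 'p2) U \<Rightarrow> 'q0" where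
  "val_of f0 \<delta> w = (case hd w of Inl a \<Rightarrow> f0 a | _ \<Rightarrow> m0 (\<delta> (wx w)) (wn w))"
definition cx :: "('x0, 'x1, 'x2, 'p0, 'p1, 'p2) U set \<Rightarrow> 'x1" where "cx c = wx (SOME w. w \<in> c)"
definition cn :: "('x0, 'x1, 'x2, 'p0, 'p1, 'p2) U set \<Rightarrow> nat" where "cn c = wn (SOME w. w \<in> c)"

lemma raw_simps[simp]:
  "rawA a = rawA a' \<longleftrightarrow> a = a'" "rawI x n = rawI x' n' \<longleftrightarrow> x = x' \<and> n = n'"
  "rawA a \<noteq> rawI x n" "rawI x n \<noteq> rawA a"
  "val_of f0 \<delta> (rawA a) = f0 a" "val_of f0 \<delta> (rawI x n) = m0 (\<delta> x) n"
  "cx {rawI x n} = x" "cn {rawI x n} = n"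
  by (simp_all add: rawA_def rawI_def val_of_def wx_def wn_def cx_def cn_def)

locale ctx =
  fixes P :: "('p0, 'p1, 'p2) polyend"
    and X :: "('x0, 'x1, 'x2) polyend"
    and \<phi> :: "('x0, 'x1, 'x2, 'p0, ('p0, 'p1, 'p2) ptree set, (('p0, 'p1, 'p2) ptree \<times> nat) set) pmor"
  assumes P: "polyend P" and phi: "is_mor X (free_monad P) \<phi>"
begin

definition Tx where "Tx x = fst (SOME r. r \<in> m1 \<phi> x)"
definition Dx where "Dx x = snd (SOME r. r \<in> m1 \<phi> x)"
definition leaf where
  "leaf e = (THE l. l \<in> leaves (Tx (prj X e)) \<and> mclass P ((Tx (prj X e), Dx (prj X e)), l) = m2 \<phi> e)"

lemma X: "polyend X" using is_morD(1)[OF phi] .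
lemmas Xd = polyendD[OF X]

lemma Tx_ptree:
  assumes x: "x \<in> E1 X"
  shows "(Tx x, Dx x) \<in> ptrees P" "pclass P (Tx x, Dx x) = m1 \<phi> x"
proof -
  have "m1 \<phi> x \<in> tr P" using is_morD(4)[OF phi x] by (simp add: fm_simps)
  then obtain r0 where r0: "r0 \<in> ptrees P" "m1 \<phi> x = pclass P r0" unfolding tr_def by blast
  have eq: "(Tx x, Dx x) = (SOME y. y \<in> pclass P r0)" by (simp add: Tx_def Dx_def r0)
  show "(Tx x, Dx x) \<in> ptrees P" using pclass_some(1)[OF r0(1)] eq by simp
  moreover have "ptree_iso r0 (Tx x, Dx x)" using pclass_some(2)[OF r0(1)] eq by simp
  ultimately have "pclass P r0 = pclass P (Tx x, Dx x)"
    using pclass_eq_iff[OF r0(1)] by blast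
  then show "pclass P (Tx x, Dx x) = m1 \<phi> x" using r0(2) by simp
qed

lemma Tx_tree: "x \<in> E1 X \<Longrightarrow> is_tree (Tx x)" and Dx_mor: "x \<in> E1 X \<Longrightarrow> is_mor (Tx x) P (Dx x)"
  using Tx_ptree(1) by (auto simp: ptrees_iff)

lemma phi_fibre:
  assumes x: "x \<in> E1 X"
  shows "bij_betw (m2 \<phi>) (fibre X x) ((\<lambda>l. mclass P ((Tx x, Dx x), l)) ` leaves (Tx x))"
  using is_morD(9)[OF phi x] fibre_fm[OF Tx_ptree(1)[OF x]] Tx_ptree(2)[OF x] by simp

lemma leaf_prop:
  assumes e: "e \<in> E2 X"
  shows "leaf e \<in> leaves (Tx (prj X e))" "mclass P ((Tx (prj X e), Dx (prj X e)), leaf e) = m2 \<phi> e"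
proof -
  let ?x = "prj X e"
  have x: "?x \<in> E1 X" using Xd(2)[OF e] .
  have "e \<in> fibre X ?x" using e by (simp add: fibre_def)
  then have "m2 \<phi> e \<in> (\<lambda>l. mclass P ((Tx ?x, Dx ?x), l)) ` leaves (Tx ?x)"
    by (rule bij_betw_apply[OF phi_fibre[OF x]])
  then obtain l where l: "l \<in> leaves (Tx ?x)" "mclass P ((Tx ?x, Dx ?x), l) = m2 \<phi> e"
    by auto
  have "leaf e = l" unfolding leaf_def
  proof (rule the_equality)
    show "l \<in> leaves (Tx ?x) \<and> mclass P ((Tx ?x, Dx ?x), l) = m2 \<phi> e" using l by blast
  next
    fix l' assume "l' \<in> leaves (Tx ?x) \<and> mclass P ((Tx ?x, Dx ?x), l') = m2 \<phi> e"
    then show "l' = l" using mclass_leaf_inj[OF Tx_ptree(1)[OF x], of l' l] l by simp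
  qed
  then show "leaf e \<in> leaves (Tx ?x)" "mclass P ((Tx ?x, Dx ?x), leaf e) = m2 \<phi> e" using l by auto
qed

lemma leaf_unique:
  assumes e: "e \<in> E2 X" and l: "l \<in> leaves (Tx (prj X e))"
    and eq: "mclass P ((Tx (prj X e), Dx (prj X e)), l) = m2 \<phi> e"
  shows "l = leaf e"
  using mclass_leaf_inj[OF Tx_ptree(1)[OF Xd(2)[OF e]], of l "leaf e"] l leaf_prop[OF e] eq by simp

lemma leaf_bij:
  assumes x: "x \<in> E1 X"
  shows "bij_betw leaf (fibre X x) (leaves (Tx x))"
proof -
  let ?F = "\<lambda>l. mclass P ((Tx x, Dx x), l)"
  have b2: "bij_betw (?F \<circ> leaf) (fibre X x) (?F ` leaves (Tx x))"
    using phi_fibre[OF x] by (rule bij_betw_cong[THEN iffD1, rotated]) (auto simp: fibre_def leaf_prop)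
  have inj: "inj_on leaf (fibre X x)"
    using b2 unfolding bij_betw_def by (rule inj_on_imageI2[OF conjunct1])
  have sub: "leaf ` fibre X x \<subseteq> leaves (Tx x)" using leaf_prop by (auto simp: fibre_def)
  have sup: "leaves (Tx x) \<subseteq> leaf ` fibre X x"
  proof
    fix l assume l: "l \<in> leaves (Tx x)"
    have "?F l \<in> m2 \<phi> ` fibre X x"
      using bij_betw_imp_surj_on[OF phi_fibre[OF x]] l by blast
    then obtain e where e: "e \<in> fibre X x" "?F l = m2 \<phi> e" by blast
    have ee: "prj X e = x" "e \<in> E2 X" using e(1) by (auto simp: fibre_def)
    have "l = leaf e" by (rule leaf_unique) (use ee l e(2) in auto)
    then show "l \<in> leaf ` fibre X x" using e by blast
  qed
  show ?thesis unfolding bij_betw_def using inj sub sup by blast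
qed

definition pos :: "'x1 \<Rightarrow> nat \<Rightarrow> ('x0, 'x1, 'x2, 'p0, 'p1, 'p2) U" where
  "pos x n = (if n \<in> leaves (Tx x) then rawA (src X (inv_into (fibre X x) leaf n))
              else if n = root (Tx x) then rawA (tgt X x) else rawI x n)"

definition RR :: "(('x0, 'x1, 'x2, 'p0, 'p1, 'p2) U \<times> ('x0, 'x1, 'x2, 'p0, 'p1, 'p2) U) set" where
  "RR = {(pos x (root (Tx x)), rawA (tgt X x)) | x. x \<in> E1 X}"

definition cls where "cls r = {r'. (r, r') \<in> (RR \<union> RR\<inverse>)\<^sup>*}"

lemma pos_leaf:
  assumes x: "x \<in> E1 X" and e: "e \<in> fibre X x"
  shows "pos x (leaf e) = rawA (src X e)"
proof -
  have b: "bij_betw leaf (fibre X x) (leaves (Tx x))" by (rule leaf_bij[OF x])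
  have "leaf e \<in> leaves (Tx x)" using bij_betw_apply[OF b e] .
  moreover have "inv_into (fibre X x) leaf (leaf e) = e"
    using inv_into_f_f[OF bij_betw_imp_inj_on[OF b] e] .
  ultimately show ?thesis by (simp add: pos_def)
qed

lemma pos_inner: "n \<notin> leaves (Tx x) \<Longrightarrow> n \<noteq> root (Tx x) \<Longrightarrow> pos x n = rawI x n"
  by (simp add: pos_def)

lemma pos_root: "root (Tx x) \<notin> leaves (Tx x) \<Longrightarrow> pos x (root (Tx x)) = rawA (tgt X x)"
  by (simp add: pos_def)

lemma cls_refl: "r \<in> cls r" by (simp add: cls_def)

lemma sym_S: "sym ((RR \<union> RR\<inverse>)\<^sup>*)"
  by (rule sym_rtrancl) (auto simp: sym_def)

lemma cls_eq: assumes "r' \<in> cls r" shows "cls r' = cls r"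
proof -
  have "(r, r') \<in> (RR \<union> RR\<inverse>)\<^sup>*" using assms by (simp add: cls_def)
  moreover then have "(r', r) \<in> (RR \<union> RR\<inverse>)\<^sup>*" using sym_S by (rule symD[rotated])
  ultimately show ?thesis unfolding cls_def
    by (intro set_eqI iffI; simp)
qed

lemma cls_R: "x \<in> E1 X \<Longrightarrow> cls (pos x (root (Tx x))) = cls (rawA (tgt X x))"
proof -
  assume x: "x \<in> E1 X"
  have "(pos x (root (Tx x)), rawA (tgt X x)) \<in> RR" unfolding RR_def using x by blast
  then have "rawA (tgt X x) \<in> cls (pos x (root (Tx x)))" unfolding cls_def by blast
  from cls_eq[OF this] show ?thesis by simp
qed

lemma val_cls:
  assumes v: "\<And>x. x \<in> E1 X \<Longrightarrow> v (pos x (root (Tx x))) = v (rawA (tgt X x))"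
    and r: "r' \<in> cls r"
  shows "v r' = v r"
proof -
  have "(r, r') \<in> (RR \<union> RR\<inverse>)\<^sup>*" using r by (simp add: cls_def)
  then show ?thesis
  proof (induction rule: rtrancl_induct)
    case base then show ?case by simp
  next
    case (step y z)
    have "v z = v y"
    proof (cases "(y, z) \<in> RR")
      case True
      then obtain x where "x \<in> E1 X" "y = pos x (root (Tx x))" "z = rawA (tgt X x)" unfolding RR_def by blast
      then show ?thesis using v by metis
    next
      case False
      then have "(z, y) \<in> RR" using step(2) by blast
      then obtain x where "x \<in> E1 X" "z = pos x (root (Tx x))" "y = rawA (tgt X x)" unfolding RR_def by blast
      then show ?thesis using v by metis
    qed
    then show ?case using step(3) by simp
  qed
qed

definition L0 where "L0 = cls ` (rawA ` E0 X \<union> (\<Union>x\<in>E1 X. pos x ` E0 (Tx x)))"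
definition L1s :: "('x0, 'x1, 'x2, 'p0, 'p1, 'p2) U set set" where
  "L1s = {{rawI x b} | x b. x \<in> E1 X \<and> b \<in> E1 (Tx x)}"
definition L2s :: "('x0, 'x1, 'x2, 'p0, 'p1, 'p2) U set set" where
  "L2s = {{rawI x e} | x e. x \<in> E1 X \<and> e \<in> E2 (Tx x)}"

definition Lp where
  "Lp = \<lparr>E0 = L0, E1 = L1s, E2 = L2s,
         src = \<lambda>c. cls (pos (cx c) (src (Tx (cx c)) (cn c))),
         prj = \<lambda>c. {rawI (cx c) (prj (Tx (cx c)) (cn c))},
         tgt = \<lambda>c. cls (pos (cx c) (tgt (Tx (cx c)) (cn c)))\<rparr>"

lemma Lp_simps:
  "E0 Lp = L0" "E1 Lp = L1s" "E2 Lp = L2s"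
  "src Lp {rawI x e} = cls (pos x (src (Tx x) e))"
  "prj Lp {rawI x e} = {rawI x (prj (Tx x) e)}"
  "tgt Lp {rawI x b} = cls (pos x (tgt (Tx x) b))"
  by (simp_all add: Lp_def)

lemma L1s_iff: "c \<in> L1s \<longleftrightarrow> (\<exists>x b. c = {rawI x b} \<and> x \<in> E1 X \<and> b \<in> E1 (Tx x))"
  unfolding L1s_def by blast
lemma L2s_iff: "c \<in> L2s \<longleftrightarrow> (\<exists>x e. c = {rawI x e} \<and> x \<in> E1 X \<and> e \<in> E2 (Tx x))"
  unfolding L2s_def by blast

lemma L0_pos: "x \<in> E1 X \<Longrightarrow> n \<in> E0 (Tx x) \<Longrightarrow> cls (pos x n) \<in> L0"
  by (auto simp: L0_def)
lemma L0_A: "a \<in> E0 X \<Longrightarrow> cls (rawA a) \<in> L0"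
  by (auto simp: L0_def)

lemma Txd: "x \<in> E1 X \<Longrightarrow> polyend (Tx x)"
  using Tx_tree tree_polyend by blast

lemma fibre_L:
  assumes x: "x \<in> E1 X" and b: "b \<in> E1 (Tx x)"
  shows "fibre Lp {rawI x b} = (\<lambda>e. {rawI x e}) ` fibre (Tx x) b"
  using x b by (auto simp: fibre_def Lp_simps L2s_iff)

lemma polyend_L: "polyend Lp"
proof -
  have "src Lp c \<in> L0 \<and> prj Lp c \<in> L1s" if "c \<in> L2s" for c
    using that polyendD(1,2)[OF Txd] L0_pos by (auto simp: L2s_iff Lp_simps L1s_iff)
  moreover have "tgt Lp c \<in> L0 \<and> finite (fibre Lp c)" if cc: "c \<in> L1s" for c
  proof -
    obtain x b where c: "c = {rawI x b}" "x \<in> E1 X" "b \<in> E1 (Tx x)" using cc unfolding L1s_iff by blast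
    have "finite (fibre (Tx x) b)" using polyendD(4)[OF Txd[OF c(2)] c(3)] .
    then show ?thesis using c fibre_L polyendD(3)[OF Txd[OF c(2)] c(3)] L0_pos by (auto simp: Lp_simps)
  qed
  ultimately show ?thesis unfolding polyend_def Lp_simps by blast
qed

definition dx :: "'x1 \<Rightarrow> (nat, nat, nat, ('x0, 'x1, 'x2, 'p0, 'p1, 'p2) U set, ('x0, 'x1, 'x2, 'p0, 'p1, 'p2) U set, ('x0, 'x1, 'x2, 'p0, 'p1, 'p2) U set) pmor" where
  "dx x = \<lparr>m0 = \<lambda>n. cls (pos x n), m1 = \<lambda>b. {rawI x b}, m2 = \<lambda>e. {rawI x e}\<rparr>"

lemma dx_simps[simp]: "m0 (dx x) n = cls (pos x n)" "m1 (dx x) b = {rawI x b}" "m2 (dx x) e = {rawI x e}"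
  by (simp_all add: dx_def)

lemma dx_mor:
  assumes x: "x \<in> E1 X" shows "is_mor (Tx x) Lp (dx x)"
proof -
  note T = polyendD[OF Txd[OF x]]
  have "bij_betw (m2 (dx x)) (fibre (Tx x) b) (fibre Lp (m1 (dx x) b))" if "b \<in> E1 (Tx x)" for b
    using fibre_L[OF x that] by (auto simp: bij_betw_def inj_on_def)
  then show ?thesis unfolding is_mor_def using Txd[OF x] polyend_L T x L0_pos
    by (auto simp: Lp_simps L1s_iff L2s_iff)
qed

end


context ctx begin

definition ind :: "('x0 \<Rightarrow> 'q0) \<Rightarrow> ('x1 \<Rightarrow> (nat, nat, nat, 'q0, 'q1, 'q2) pmor) \<Rightarrow>
   (('x0, 'x1, 'x2, 'p0, 'p1, 'p2) U set, ('x0, 'x1, 'x2, 'p0, 'p1, 'p2) U set, ('x0, 'x1, 'x2, 'p0, 'p1, 'p2) U set, 'q0, 'q1, 'q2) pmor" where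
  "ind f0 \<delta> = \<lparr>m0 = \<lambda>C. val_of f0 \<delta> (SOME r. r \<in> C), m1 = \<lambda>c. m1 (\<delta> (cx c)) (cn c), m2 = \<lambda>c. m2 (\<delta> (cx c)) (cn c)\<rparr>"

definition good :: "('q0, 'q1, 'q2) polyend \<Rightarrow> ('x0 \<Rightarrow> 'q0) \<Rightarrow> ('x1 \<Rightarrow> (nat, nat, nat, 'q0, 'q1, 'q2) pmor) \<Rightarrow> bool" where
  "good Q f0 \<delta> \<longleftrightarrow> polyend Q \<and> (\<forall>x\<in>E1 X. is_mor (Tx x) Q (\<delta> x)) \<and>
     (\<forall>x\<in>E1 X. \<forall>e\<in>fibre X x. f0 (src X e) = m0 (\<delta> x) (leaf e)) \<and>
     (\<forall>x\<in>E1 X. f0 (tgt X x) = m0 (\<delta> x) (root (Tx x))) \<and> (\<forall>a\<in>E0 X. f0 a \<in> E0 Q)"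

lemma ind_simps12[simp]: "m1 (ind f0 \<delta>) {rawI x n} = m1 (\<delta> x) n" "m2 (ind f0 \<delta>) {rawI x n} = m2 (\<delta> x) n"
  by (simp_all add: ind_def)

lemma val_pos:
  assumes g: "good Q f0 \<delta>" and x: "x \<in> E1 X" and n: "n \<in> E0 (Tx x)"
  shows "val_of f0 \<delta> (pos x n) = m0 (\<delta> x) n"
proof (cases "n \<in> leaves (Tx x)")
  case True
  then obtain e where e: "e \<in> fibre X x" "n = leaf e"
    using bij_betw_imp_surj_on[OF leaf_bij[OF x]] by blast
  then show ?thesis using pos_leaf[OF x e(1)] g x unfolding good_def by simp
next
  case False
  show ?thesis
  proof (cases "n = root (Tx x)")
    case True
    then show ?thesis using pos_root False g x unfolding good_def by simp
  next
    case False2: False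
    then show ?thesis using pos_inner False by simp
  qed
qed

lemma val_R:
  assumes g: "good Q f0 \<delta>" and x: "x \<in> E1 X"
  shows "val_of f0 \<delta> (pos x (root (Tx x))) = val_of f0 \<delta> (rawA (tgt X x))"
  using val_pos[OF g x tree_root(1)[OF Tx_tree[OF x]]] g x unfolding good_def by simp

lemma ind0:
  assumes g: "good Q f0 \<delta>"
  shows "m0 (ind f0 \<delta>) (cls r) = val_of f0 \<delta> r"
proof -
  have "(SOME r'. r' \<in> cls r) \<in> cls r" using cls_refl by (rule someI)
  then have "val_of f0 \<delta> (SOME r'. r' \<in> cls r) = val_of f0 \<delta> r"
    by (rule val_cls[rotated]) (rule val_R[OF g])
  then show ?thesis by (simp add: ind_def)
qed

lemma ind_dx:
  assumes g: "good Q f0 \<delta>" and x: "x \<in> E1 X"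
  shows "mor_eq (Tx x) (pcomp (ind f0 \<delta>) (dx x)) (\<delta> x)"
  unfolding mor_eq_def using ind0[OF g] val_pos[OF g x] by simp

lemma ind_mor:
  assumes g: "good Q f0 \<delta>"
  shows "is_mor Lp Q (ind f0 \<delta>)"
proof -
  have Q: "polyend Q" and dm: "\<And>x. x \<in> E1 X \<Longrightarrow> is_mor (Tx x) Q (\<delta> x)"
    and f0: "\<And>a. a \<in> E0 X \<Longrightarrow> f0 a \<in> E0 Q" using g unfolding good_def by auto
  have c0: "m0 (ind f0 \<delta>) C \<in> E0 Q" if C: "C \<in> E0 Lp" for C
  proof -
    from C obtain r where r: "C = cls r" "r \<in> rawA ` E0 X \<union> (\<Union>x\<in>E1 X. pos x ` E0 (Tx x))"
      unfolding Lp_simps L0_def by blast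
    then show ?thesis
    proof (elim UnE)
      assume "r \<in> rawA ` E0 X"
      then show ?thesis using r(1) ind0[OF g] f0 by auto
    next
      assume "r \<in> (\<Union>x\<in>E1 X. pos x ` E0 (Tx x))"
      then obtain x n where "x \<in> E1 X" "n \<in> E0 (Tx x)" "r = pos x n" by blast
      then show ?thesis using r(1) ind0[OF g] val_pos[OF g] is_morD(3)[OF dm] by auto
    qed
  qed
  have c1: "m1 (ind f0 \<delta>) c \<in> E1 Q" if "c \<in> E1 Lp" for c
    using that is_morD(4)[OF dm] unfolding Lp_simps L1s_iff by auto
  have c2: "m2 (ind f0 \<delta>) c \<in> E2 Q \<and>
      m0 (ind f0 \<delta>) (src Lp c) = src Q (m2 (ind f0 \<delta>) c) \<and>
      m1 (ind f0 \<delta>) (prj Lp c) = prj Q (m2 (ind f0 \<delta>) c)" if cc: "c \<in> E2 Lp" for c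
  proof -
    obtain x e where c: "c = {rawI x e}" "x \<in> E1 X" "e \<in> E2 (Tx x)" using cc unfolding Lp_simps L2s_iff by blast
    have s: "src (Tx x) e \<in> E0 (Tx x)" using polyendD(1)[OF Txd[OF c(2)] c(3)] .
    show ?thesis using c is_morD(5,6,7)[OF dm[OF c(2)] c(3)] ind0[OF g] val_pos[OF g c(2) s]
      by (simp add: Lp_simps)
  qed
  have c3: "m0 (ind f0 \<delta>) (tgt Lp c) = tgt Q (m1 (ind f0 \<delta>) c) \<and>
      bij_betw (m2 (ind f0 \<delta>)) (fibre Lp c) (fibre Q (m1 (ind f0 \<delta>) c))" if cc: "c \<in> E1 Lp" for c
  proof -
    obtain x b where c: "c = {rawI x b}" "x \<in> E1 X" "b \<in> E1 (Tx x)" using cc unfolding Lp_simps L1s_iff by blast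
    have t: "tgt (Tx x) b \<in> E0 (Tx x)" using polyendD(3)[OF Txd[OF c(2)] c(3)] .
    have "bij_betw (\<lambda>e. {rawI x e}) (fibre (Tx x) b) (fibre Lp c)"
      using fibre_L[OF c(2,3)] c(1) by (auto simp: bij_betw_def inj_on_def)
    moreover have "bij_betw (m2 (ind f0 \<delta>) \<circ> (\<lambda>e. {rawI x e})) (fibre (Tx x) b) (fibre Q (m1 (ind f0 \<delta>) c))"
      using is_morD(9)[OF dm[OF c(2)] c(3)] c(1) by (simp add: comp_def)
    ultimately have "bij_betw (m2 (ind f0 \<delta>)) (fibre Lp c) (fibre Q (m1 (ind f0 \<delta>) c))"
      using bij_betw_comp_iff by blast
    then show ?thesis using c is_morD(8)[OF dm[OF c(2)] c(3)] ind0[OF g] val_pos[OF g c(2) t]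
      by (simp add: Lp_simps)
  qed
  show ?thesis unfolding is_mor_def using polyend_L Q c0 c1 c2 c3 by blast
qed

end


context ctx begin

lemma goodP: "good P (m0 \<phi>) Dx"
proof -
  have c2: "m0 \<phi> (src X e) = m0 (Dx x) (leaf e)" if x: "x \<in> E1 X" and e: "e \<in> fibre X x" for x e
  proof -
    have e2: "e \<in> E2 X" "prj X e = x" using e by (auto simp: fibre_def)
    have m: "((Tx x, Dx x), leaf e) \<in> mptrees P" using Tx_ptree(1)[OF x] leaf_prop(1)[OF e2(1)] e2
      by (simp add: mptrees_iff)
    have "m0 \<phi> (src X e) = src (free_monad P) (m2 \<phi> e)" using is_morD(6)[OF phi e2(1)] .
    also have "\<dots> = src (free_monad P) (mclass P ((Tx x, Dx x), leaf e))" using leaf_prop(2)[OF e2(1)] e2 by simp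
    also have "\<dots> = m0 (Dx x) (leaf e)" using src_fm[OF m] by simp
    finally show ?thesis .
  qed
  have c3: "m0 \<phi> (tgt X x) = m0 (Dx x) (root (Tx x))" if x: "x \<in> E1 X" for x
    using is_morD(8)[OF phi x] tgt_fm[OF Tx_ptree(1)[OF x]] Tx_ptree(2)[OF x] by simp
  show ?thesis unfolding good_def using P Dx_mor c2 c3 is_morD(3)[OF phi] by (simp add: fm_simps)
qed

definition lam where "lam = ind (m0 \<phi>) Dx"

definition eta where
  "eta = \<lparr>m0 = \<lambda>a. cls (rawA a), m1 = \<lambda>x. pclass Lp (Tx x, dx x),
          m2 = \<lambda>e. mclass Lp ((Tx (prj X e), dx (prj X e)), leaf e)\<rparr>"

lemma eta_simps[simp]: "m0 eta a = cls (rawA a)" "m1 eta x = pclass Lp (Tx x, dx x)"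
  "m2 eta e = mclass Lp ((Tx (prj X e), dx (prj X e)), leaf e)"
  by (simp_all add: eta_def)

lemma Tx_ptreeL: "x \<in> E1 X \<Longrightarrow> (Tx x, dx x) \<in> ptrees Lp"
  using Tx_tree dx_mor by (simp add: ptrees_iff)

lemma eta_mptree: "e \<in> E2 X \<Longrightarrow> ((Tx (prj X e), dx (prj X e)), leaf e) \<in> mptrees Lp"
  using Tx_ptreeL Xd(2) leaf_prop(1) by (simp add: mptrees_iff)

lemma eta_mor: "is_mor X (free_monad Lp) eta"
proof -
  have src: "m0 eta (src X e) = src (free_monad Lp) (m2 eta e)" if e: "e \<in> E2 X" for e
  proof -
    have x: "prj X e \<in> E1 X" and ef: "e \<in> fibre X (prj X e)" using Xd(2)[OF e] e by (auto simp: fibre_def)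
    show ?thesis using src_fm[OF eta_mptree[OF e]] pos_leaf[OF x ef] by simp
  qed
  have prj: "m1 eta (prj X e) = prj (free_monad Lp) (m2 eta e)" if e: "e \<in> E2 X" for e
    using prj_fm[OF eta_mptree[OF e]] by simp
  have tgt: "m0 eta (tgt X x) = tgt (free_monad Lp) (m1 eta x)" if x: "x \<in> E1 X" for x
    using tgt_fm[OF Tx_ptreeL[OF x]] cls_R[OF x] by simp
  have bij: "bij_betw (m2 eta) (fibre X x) (fibre (free_monad Lp) (m1 eta x))" if x: "x \<in> E1 X" for x
  proof -
    let ?G = "\<lambda>l. mclass Lp ((Tx x, dx x), l)"
    have "inj_on ?G (leaves (Tx x))"
      using mclass_leaf_inj[OF Tx_ptreeL[OF x]] by (auto intro: inj_onI)
    then have "bij_betw ?G (leaves (Tx x)) (?G ` leaves (Tx x))" by (simp add: bij_betw_def)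
    then have "bij_betw (?G \<circ> leaf) (fibre X x) (?G ` leaves (Tx x))"
      using bij_betw_trans leaf_bij[OF x] by blast
    then have "bij_betw (m2 eta) (fibre X x) (?G ` leaves (Tx x))"
      by (rule bij_betw_cong[THEN iffD1, rotated]) (auto simp: fibre_def)
    then show ?thesis using fibre_fm[OF Tx_ptreeL[OF x]] by simp
  qed
  have mem: "\<And>a. a \<in> E0 X \<Longrightarrow> m0 eta a \<in> E0 (free_monad Lp)"
    "\<And>x. x \<in> E1 X \<Longrightarrow> m1 eta x \<in> E1 (free_monad Lp)"
    "\<And>e. e \<in> E2 X \<Longrightarrow> m2 eta e \<in> E2 (free_monad Lp)"
    using L0_A Tx_ptreeL eta_mptree by (auto simp: fm_simps Lp_simps tr_def trm_def)
  show ?thesis unfolding is_mor_def using X polyend_fm[OF polyend_L] mem src prj tgt bij by blast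
qed

lemma lam_mor: "is_mor Lp P lam"
  unfolding lam_def by (rule ind_mor[OF goodP])

lemma lam_dx: "x \<in> E1 X \<Longrightarrow> mor_eq (Tx x) (Dx x) (pcomp lam (dx x))"
  unfolding lam_def using ind_dx[OF goodP] mor_eq_sym by blast

lemma arrow: "arrow_ok P X \<phi> Lp lam eta"
proof -
  have e0: "m0 lam (m0 eta a) = m0 \<phi> a" for a
    unfolding lam_def using ind0[OF goodP] by simp
  have e1: "m1 (free_mor P lam) (m1 eta x) = m1 \<phi> x" if x: "x \<in> E1 X" for x
  proof -
    have "m1 (free_mor P lam) (m1 eta x) = pclass P (Tx x, pcomp lam (dx x))"
      using fmor1[OF lam_mor Tx_ptreeL[OF x]] by simp
    also have "\<dots> = pclass P (Tx x, Dx x)" using pclass_cong(2)[OF Tx_ptree(1)[OF x] lam_dx[OF x]] .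
    finally show ?thesis using Tx_ptree(2)[OF x] by simp
  qed
  have e2: "m2 (free_mor P lam) (m2 eta e) = m2 \<phi> e" if e: "e \<in> E2 X" for e
  proof -
    let ?x = "prj X e"
    have x: "?x \<in> E1 X" using Xd(2)[OF e] .
    have "m2 (free_mor P lam) (m2 eta e) = mclass P ((Tx ?x, pcomp lam (dx ?x)), leaf e)"
      using fmor2[OF lam_mor eta_mptree[OF e]] by simp
    also have "\<dots> = mclass P ((Tx ?x, Dx ?x), leaf e)"
      using mclass_cong(2)[OF _ lam_dx[OF x]] Tx_ptree(1)[OF x] leaf_prop(1)[OF e] by (simp add: mptrees_iff)
    finally show ?thesis using leaf_prop(2)[OF e] by simp
  qed
  show ?thesis unfolding arrow_ok_def mor_eq_def using lam_mor eta_mor e0 e1 e2 by (simp add: fmor_simps(1))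
qed

end


locale ctxQ = ctx P X \<phi>
  for P :: "('p0, 'p1, 'p2) polyend"
    and X :: "('x0, 'x1, 'x2) polyend"
    and \<phi> :: "('x0, 'x1, 'x2, 'p0, ('p0, 'p1, 'p2) ptree set, (('p0, 'p1, 'p2) ptree \<times> nat) set) pmor" +
  fixes Q :: "('q0, 'q1, 'q2) polyend"
    and \<kappa> :: "('q0, 'q1, 'q2, 'p0, 'p1, 'p2) pmor"
    and h :: "('x0, 'x1, 'x2, 'q0, ('q0, 'q1, 'q2) ptree set, (('q0, 'q1, 'q2) ptree \<times> nat) set) pmor"
  assumes k: "is_mor Q P \<kappa>" and hm: "is_mor X (free_monad Q) h"
    and he: "mor_eq X (pcomp (free_mor P \<kappa>) h) \<phi>"
begin

lemma he0: "a \<in> E0 X \<Longrightarrow> m0 \<kappa> (m0 h a) = m0 \<phi> a"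
  using he by (simp add: mor_eq_def fmor_simps(1))
lemma he1: "x \<in> E1 X \<Longrightarrow> m1 (free_mor P \<kappa>) (m1 h x) = m1 \<phi> x"
  using he by (simp add: mor_eq_def)
lemma he2: "e \<in> E2 X \<Longrightarrow> m2 (free_mor P \<kappa>) (m2 h e) = m2 \<phi> e"
  using he by (simp add: mor_eq_def)

definition QD where
  "QD x = (SOME \<delta>. (Tx x, \<delta>) \<in> ptrees Q \<and> pclass Q (Tx x, \<delta>) = m1 h x \<and> mor_eq (Tx x) (pcomp \<kappa> \<delta>) (Dx x))"

lemma QD_ex:
  assumes x: "x \<in> E1 X"
  shows "\<exists>\<delta>. (Tx x, \<delta>) \<in> ptrees Q \<and> pclass Q (Tx x, \<delta>) = m1 h x \<and> mor_eq (Tx x) (pcomp \<kappa> \<delta>) (Dx x)"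
proof -
  have "m1 h x \<in> tr Q" using is_morD(4)[OF hm x] by (simp add: fm_simps)
  then obtain r0 where r0: "r0 \<in> ptrees Q" "m1 h x = pclass Q r0" unfolding tr_def by blast
  obtain S G where sg: "r0 = (S, G)" by (cases r0)
  have SG: "(S, G) \<in> ptrees Q" "(S, pcomp \<kappa> G) \<in> ptrees P" using r0 sg push_ptrees[OF k] by auto
  have "pclass P (S, pcomp \<kappa> G) = m1 \<phi> x" using he1[OF x] fmor1[OF k r0(1)] r0(2) sg by simp
  then have "pclass P (Tx x, Dx x) = pclass P (S, pcomp \<kappa> G)" using Tx_ptree(2)[OF x] by simp
  then have "ptree_iso (Tx x, Dx x) (S, pcomp \<kappa> G)" using pclass_eq_iff[OF Tx_ptree(1)[OF x] SG(2)] by simp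
  then obtain f where f: "iso_via (Tx x) S f" "mor_eq (Tx x) (pcomp (pcomp \<kappa> G) f) (Dx x)"
    unfolding ptree_iso_def by (auto simp: ptree_iso_via_iff)
  have fm: "is_mor (Tx x) S f" using f(1) unfolding iso_via_def by blast
  have Gm: "is_mor S Q G" using SG(1) by (simp add: ptrees_iff)
  have t1: "(Tx x, pcomp G f) \<in> ptrees Q" using Tx_tree[OF x] mor_comp[OF fm Gm] by (simp add: ptrees_iff)
  have "ptree_iso_via (Tx x, pcomp G f) (S, G) f" using f(1) by (simp add: ptree_iso_via_iff mor_eq_refl)
  then have "pclass Q (Tx x, pcomp G f) = pclass Q (S, G)"
    using pclass_eq_iff[OF t1 SG(1)] unfolding ptree_iso_def by blast
  moreover have "mor_eq (Tx x) (pcomp \<kappa> (pcomp G f)) (Dx x)" using f(2) by (simp add: mor_eq_def)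
  ultimately show ?thesis using t1 r0(2) sg by blast
qed

lemma QD_prop:
  assumes x: "x \<in> E1 X"
  shows "(Tx x, QD x) \<in> ptrees Q" "pclass Q (Tx x, QD x) = m1 h x" "mor_eq (Tx x) (pcomp \<kappa> (QD x)) (Dx x)"
  using someI_ex[OF QD_ex[OF x]] unfolding QD_def by auto

lemma QD_mor: "x \<in> E1 X \<Longrightarrow> is_mor (Tx x) Q (QD x)"
  using QD_prop(1) by (simp add: ptrees_iff)

lemma h2_eq:
  assumes e: "e \<in> E2 X"
  shows "m2 h e = mclass Q ((Tx (prj X e), QD (prj X e)), leaf e)"
proof -
  let ?x = "prj X e"
  have x: "?x \<in> E1 X" using Xd(2)[OF e] .
  have "m2 h e \<in> fibre (free_monad Q) (m1 h ?x)"
    using is_morD(5,7)[OF hm e] by (simp add: fibre_def)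
  then have "m2 h e \<in> (\<lambda>l. mclass Q ((Tx ?x, QD ?x), l)) ` leaves (Tx ?x)"
    using fibre_fm[OF QD_prop(1)[OF x]] QD_prop(2)[OF x] by simp
  then obtain l where l: "l \<in> leaves (Tx ?x)" "m2 h e = mclass Q ((Tx ?x, QD ?x), l)" by blast
  have m: "((Tx ?x, QD ?x), l) \<in> mptrees Q" using QD_prop(1)[OF x] l(1) by (simp add: mptrees_iff)
  have "m2 \<phi> e = mclass P ((Tx ?x, pcomp \<kappa> (QD ?x)), l)"
    using he2[OF e] fmor2[OF k m] l(2) by simp
  also have "\<dots> = mclass P ((Tx ?x, Dx ?x), l)"
    using mclass_cong(2)[OF _ mor_eq_sym[OF QD_prop(3)[OF x]]] Tx_ptree(1)[OF x] l(1) by (simp add: mptrees_iff)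
  finally have "l = leaf e" using leaf_unique[OF e l(1)] by simp
  then show ?thesis using l by simp
qed

lemma goodQ: "good Q (m0 h) QD"
proof -
  have c2: "m0 h (src X e) = m0 (QD x) (leaf e)" if x: "x \<in> E1 X" and e: "e \<in> fibre X x" for x e
  proof -
    have e2: "e \<in> E2 X" "prj X e = x" using e by (auto simp: fibre_def)
    have m: "((Tx x, QD x), leaf e) \<in> mptrees Q" using QD_prop(1)[OF x] leaf_prop(1)[OF e2(1)] e2
      by (simp add: mptrees_iff)
    have "m0 h (src X e) = src (free_monad Q) (m2 h e)" using is_morD(6)[OF hm e2(1)] .
    also have "\<dots> = src (free_monad Q) (mclass Q ((Tx x, QD x), leaf e))" using h2_eq[OF e2(1)] e2 by simp
    also have "\<dots> = m0 (QD x) (leaf e)" using src_fm[OF m] by simp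
    finally show ?thesis .
  qed
  have c3: "m0 h (tgt X x) = m0 (QD x) (root (Tx x))" if x: "x \<in> E1 X" for x
    using is_morD(8)[OF hm x] tgt_fm[OF QD_prop(1)[OF x]] QD_prop(2)[OF x] by simp
  show ?thesis unfolding good_def using is_morD(1)[OF k] QD_mor c2 c3 is_morD(3)[OF hm] by (simp add: fm_simps)
qed

definition gg where "gg = ind (m0 h) QD"

lemma gg_mor: "is_mor Lp Q gg" unfolding gg_def by (rule ind_mor[OF goodQ])

lemma gg_dx: "x \<in> E1 X \<Longrightarrow> mor_eq (Tx x) (QD x) (pcomp gg (dx x))"
  unfolding gg_def using ind_dx[OF goodQ] mor_eq_sym by blast

lemma L0_cases:
  assumes "C \<in> L0"
  obtains a where "a \<in> E0 X" "C = cls (rawA a)"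
  | x n where "x \<in> E1 X" "n \<in> E0 (Tx x)" "C = cls (pos x n)"
  using assms unfolding L0_def by blast

lemma gg_lam: "mor_eq Lp (pcomp \<kappa> gg) lam"
proof -
  have "m0 \<kappa> (m0 gg C) = m0 lam C" if C: "C \<in> L0" for C
    using C
  proof (cases rule: L0_cases)
    case (1 a)
    then show ?thesis unfolding gg_def lam_def using ind0[OF goodQ] ind0[OF goodP] he0 by simp
  next
    case (2 x n)
    then show ?thesis unfolding gg_def lam_def using ind0[OF goodQ] ind0[OF goodP]
        val_pos[OF goodQ] val_pos[OF goodP] QD_prop(3)[OF 2(1)] by (simp add: mor_eq_def)
  qed
  moreover have "m1 \<kappa> (m1 gg c) = m1 lam c" if c: "c \<in> L1s" for c
    using c QD_prop(3) unfolding L1s_iff gg_def lam_def by (auto simp: mor_eq_def)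
  moreover have "m2 \<kappa> (m2 gg c) = m2 lam c" if c: "c \<in> L2s" for c
    using c QD_prop(3) unfolding L2s_iff gg_def lam_def by (auto simp: mor_eq_def)
  ultimately show ?thesis unfolding mor_eq_def Lp_simps by simp
qed

lemma gg_h: "mor_eq X (pcomp (free_mor Q gg) eta) h"
proof -
  have e0: "m0 gg (m0 eta a) = m0 h a" for a
    unfolding gg_def using ind0[OF goodQ] by simp
  have e1: "m1 (free_mor Q gg) (m1 eta x) = m1 h x" if x: "x \<in> E1 X" for x
  proof -
    have "m1 (free_mor Q gg) (m1 eta x) = pclass Q (Tx x, pcomp gg (dx x))"
      using fmor1[OF gg_mor Tx_ptreeL[OF x]] by simp
    also have "\<dots> = pclass Q (Tx x, QD x)" using pclass_cong(2)[OF QD_prop(1)[OF x] gg_dx[OF x]] .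
    finally show ?thesis using QD_prop(2)[OF x] by simp
  qed
  have e2: "m2 (free_mor Q gg) (m2 eta e) = m2 h e" if e: "e \<in> E2 X" for e
  proof -
    let ?x = "prj X e"
    have x: "?x \<in> E1 X" using Xd(2)[OF e] .
    have "m2 (free_mor Q gg) (m2 eta e) = mclass Q ((Tx ?x, pcomp gg (dx ?x)), leaf e)"
      using fmor2[OF gg_mor eta_mptree[OF e]] by simp
    also have "\<dots> = mclass Q ((Tx ?x, QD ?x), leaf e)"
      using mclass_cong(2)[OF _ gg_dx[OF x]] QD_prop(1)[OF x] leaf_prop(1)[OF e] by (simp add: mptrees_iff)
    finally show ?thesis using h2_eq[OF e] by simp
  qed
  show ?thesis unfolding mor_eq_def using e0 e1 e2 by (simp add: fmor_simps(1))
qed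

lemma unique_dx:
  assumes g1: "is_mor Lp Q g'" and g2: "mor_eq Lp (pcomp \<kappa> g') lam"
    and g3: "mor_eq X (pcomp (free_mor Q g') eta) h" and x: "x \<in> E1 X"
  shows "mor_eq (Tx x) (pcomp g' (dx x)) (QD x)"
proof -
  have t: "(Tx x, pcomp g' (dx x)) \<in> ptrees Q" using Tx_tree[OF x] mor_comp[OF dx_mor[OF x] g1] by (simp add: ptrees_iff)
  have "pclass Q (Tx x, pcomp g' (dx x)) = m1 (free_mor Q g') (m1 eta x)"
    using fmor1[OF g1 Tx_ptreeL[OF x]] by simp
  also have "\<dots> = m1 h x" using g3 x by (simp add: mor_eq_def)
  finally have "pclass Q (Tx x, QD x) = pclass Q (Tx x, pcomp g' (dx x))" using QD_prop(2)[OF x] by simp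
  then have "ptree_iso (Tx x, QD x) (Tx x, pcomp g' (dx x))" using pclass_eq_iff[OF QD_prop(1)[OF x] t] by simp
  then obtain f where f: "iso_via (Tx x) (Tx x) f" "mor_eq (Tx x) (pcomp (pcomp g' (dx x)) f) (QD x)"
    unfolding ptree_iso_def by (auto simp: ptree_iso_via_iff)
  have fm: "is_mor (Tx x) (Tx x) f" using f(1) unfolding iso_via_def by blast
  have T: "is_tree (Tx x)" using Tx_tree[OF x] .
  have dd: "m2 (Dx x) (m2 f e) = m2 (Dx x) (m2 pid e)" if e: "e \<in> E2 (Tx x)" for e
  proof -
    have fe: "m2 f e \<in> E2 (Tx x)" using is_morD(5)[OF fm e] .
    have de: "m2 (dx x) (m2 f e) \<in> E2 Lp" using is_morD(5)[OF dx_mor[OF x] fe] .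
    have "m2 (Dx x) (m2 f e) = m2 lam (m2 (dx x) (m2 f e))" using lam_dx[OF x] fe by (simp add: mor_eq_def)
    also have "\<dots> = m2 \<kappa> (m2 g' (m2 (dx x) (m2 f e)))" using g2 de by (simp add: mor_eq_def)
    also have "\<dots> = m2 \<kappa> (m2 (QD x) e)" using f(2) e by (simp add: mor_eq_def)
    also have "\<dots> = m2 (Dx x) e" using QD_prop(3)[OF x] e by (simp add: mor_eq_def)
    finally show ?thesis by simp
  qed
  have "mor_eq (Tx x) f pid"
    by (rule rigid[OF T T Dx_mor[OF x] fm mor_id[OF tree_polyend[OF T]]])
       (use iso_root[OF T T f(1)] dd in auto)
  then show ?thesis using f(2) unfolding mor_eq_def by simp
qed

lemma unique:
  assumes g1: "is_mor Lp Q g'" and g2: "mor_eq Lp (pcomp \<kappa> g') lam"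
    and g3: "mor_eq X (pcomp (free_mor Q g') eta) h"
  shows "mor_eq Lp g' gg"
proof -
  note u = unique_dx[OF g1 g2 g3]
  have "m0 g' C = m0 gg C" if C: "C \<in> L0" for C
    using C
  proof (cases rule: L0_cases)
    case (1 a)
    have "m0 g' C = m0 h a" using g3 1 by (simp add: mor_eq_def fmor_simps(1))
    then show ?thesis using 1 unfolding gg_def using ind0[OF goodQ] by simp
  next
    case (2 x n)
    have "m0 g' C = m0 (QD x) n" using u[OF 2(1)] 2 by (simp add: mor_eq_def)
    then show ?thesis using 2 unfolding gg_def using ind0[OF goodQ] val_pos[OF goodQ] by simp
  qed
  moreover have "m1 g' c = m1 gg c" if cc: "c \<in> L1s" for c
  proof -
    obtain x b where c: "c = {rawI x b}" "x \<in> E1 X" "b \<in> E1 (Tx x)" using cc unfolding L1s_iff by blast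
    then show ?thesis using u[OF c(2)] unfolding gg_def by (simp add: mor_eq_def)
  qed
  moreover have "m2 g' c = m2 gg c" if cc: "c \<in> L2s" for c
  proof -
    obtain x e where c: "c = {rawI x e}" "x \<in> E1 X" "e \<in> E2 (Tx x)" using cc unfolding L2s_iff by blast
    then show ?thesis using u[OF c(2)] unfolding gg_def by (simp add: mor_eq_def)
  qed
  ultimately show ?thesis unfolding mor_eq_def Lp_simps by simp
qed

end

context ctx begin

lemma factors: "factors_uniquely P X \<phi> Lp lam eta Q \<kappa> h"
  unfolding factors_uniquely_def
proof (intro impI)
  assume a: "is_mor Q P \<kappa> \<and> is_mor X (free_monad Q) h \<and> mor_eq X (pcomp (free_mor P \<kappa>) h) \<phi>"
  interpret q: ctxQ P X \<phi> Q \<kappa> h using a by unfold_locales auto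
  show "\<exists>g. is_mor Lp Q g \<and> mor_eq Lp (pcomp \<kappa> g) lam \<and> mor_eq X (pcomp (free_mor Q g) eta) h \<and>
           (\<forall>g'. is_mor Lp Q g' \<and> mor_eq Lp (pcomp \<kappa> g') lam \<and> mor_eq X (pcomp (free_mor Q g') eta) h
                 \<longrightarrow> mor_eq Lp g' g)"
    using q.gg_mor q.gg_lam q.gg_h q.unique by blast
qed

end

theorem mainTheorem16:
  fixes P :: "('p0, 'p1, 'p2) polyend"
    and X :: "('x0, 'x1, 'x2) polyend"
    and \<phi> :: "('x0, 'x1, 'x2, 'p0, ('p0, 'p1, 'p2) ptree set, (('p0, 'p1, 'p2) ptree \<times> nat) set) pmor"
  assumes "polyend P"
    and "is_mor X (free_monad P) \<phi>"
  shows "\<exists>(L :: (('x0 + 'x1 + 'x2 + 'p0 + 'p1 + 'p2 + nat) list set,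
                 ('x0 + 'x1 + 'x2 + 'p0 + 'p1 + 'p2 + nat) list set,
                 ('x0 + 'x1 + 'x2 + 'p0 + 'p1 + 'p2 + nat) list set) polyend) lam \<eta>.
           arrow_ok P X \<phi> L lam \<eta> \<and>
           (\<forall>(Q :: ('q0, 'q1, 'q2) polyend) \<kappa> h. factors_uniquely P X \<phi> L lam \<eta> Q \<kappa> h) \<and>
           (\<forall>(Q :: (('x0 + 'x1 + 'x2 + 'p0 + 'p1 + 'p2 + nat) list set,
                     ('x0 + 'x1 + 'x2 + 'p0 + 'p1 + 'p2 + nat) list set,
                     ('x0 + 'x1 + 'x2 + 'p0 + 'p1 + 'p2 + nat) list set) polyend) \<kappa> h.
              factors_uniquely P X \<phi> L lam \<eta> Q \<kappa> h)"
proof -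
  interpret c: ctx P X \<phi> using assms by unfold_locales
  show ?thesis
    apply (rule exI[of _ c.Lp])
    apply (rule exI[of _ c.lam])
    apply (rule exI[of _ c.eta])
    apply (intro conjI allI)
    apply (rule c.arrow)
    apply (rule c.factors)
    apply (rule c.factors)
    done
qed


end
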